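(* Let $q=p^f$ with $p$ prime, and let $\mathbf{A}\in\mathrm{GL}_n(q)$, $n=q+1$, be the matrix defined in the context. Assume that $n=q+1=2^sr^t$ for some odd prime $r$ and integers $s,t\geqslant 0$. Then there exists a faithful $\langle\mathbf{A}\rangle$-irreducible linear $[n,2]_q$ code. If $q$ is a Mersenne prime, then $\mathbb{F}_q^n$ is a direct sum of faithful $\langle\mathbf{A}\rangle$-irreducible linear $[n,2]_q$ codes.
   Context: A linear $[n,k]_q$ code is a $k$-dimensional subspace of the row space $\mathbb{F}_q^n$. Write the multiplicative group $\mathbb{F}_q^*=\langle\eta,\lambda\rangle$ where $\lambda$ has odd order and $\eta$ has order a power of $2$. Let $\mathbf{D}=\mathrm{diag}(\eta\lambda,\lambda,\eta\lambda,\ldots,\eta\lambda)$ ($n\times n$; first entry $\eta\lambda$, second entry $\lambda$, remaining $n-2$ entries $\eta\lambda$), $\mathbf{P}=\begin{pmatrix}\mathbf{0}' & \mathbf{I}_{n-1}\\ 1 & \mathbf{0}\end{pmatrix}$ (with $\mathbf{0}'$ the zero column of length $n-1$, $\mathbf{0}$ the zero row of length $n-1$), and $\mathbf{A}=\mathbf{D}\mathbf{P}$, acting on $\mathbb{F}_q^n$ by right multiplication. A code $\mathcal{C}$ is $\langle\mathbf{A}\rangle$-invariant if $\mathcal{C}\mathbf{A}\subseteq\mathcal{C}$; an $\langle\mathbf{A}\rangle$-invariant $[n,k]_q$ code is $\langle\mathbf{A}\rangle$-irreducible if it contains no $\langle\mathbf{A}\rangle$-invariant $[n,k']_q$ code with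 $1\leqslant k'<k$, and faithful if no nonidentity element of $\langle\mathbf{A}\rangle$ fixes it pointwise. *)

theory Defs
  imports Complex_Main "HOL-Library.Function_Algebras" "HOL-Library.Cardinality" "HOL-Computational_Algebra.Primes"
begin

(* Row vectors of length n over a field 'a: functions nat => 'a vanishing outside {0..<n}.
   Indices are 0-based: coordinate i (0-based) is coordinate i+1 of the paper. *)

definition vscale :: "'a::field \<Rightarrow> (nat \<Rightarrow> 'a) \<Rightarrow> nat \<Rightarrow> 'a" where
  "vscale c v = (\<lambda>i. c * v i)"

definition Fn :: "nat \<Rightarrow> (nat \<Rightarrow> 'a::zero) set" where
  "Fn n = {v. \<forall>i\<ge>n. v i = 0}"

(* n x n matrices as functions nat => nat => 'a; only entries with indices < n matter *)
definition mat_mul :: "nat \<Rightarrow> (nat \<Rightarrow> nat \<Rightarrow> 'a::semiring_0) \<Rightarrow> (nat \<Rightarrow> nat \<Rightarrow> 'a) \<Rightarrow> nat \<Rightarrow> nat \<Rightarrow> 'a" where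
  "mat_mul n M N = (\<lambda>i j. \<Sum>k<n. M i k * N k j)"

definition id_mat :: "nat \<Rightarrow> nat \<Rightarrow> 'a::{zero,one}" where
  "id_mat = (\<lambda>i j. if i = j then 1 else 0)"

primrec mat_pow :: "nat \<Rightarrow> (nat \<Rightarrow> nat \<Rightarrow> 'a::semiring_1) \<Rightarrow> nat \<Rightarrow> nat \<Rightarrow> nat \<Rightarrow> 'a" where
  "mat_pow n M 0 = id_mat"
| "mat_pow n M (Suc m) = mat_mul n (mat_pow n M m) M"

definition row_act :: "nat \<Rightarrow> (nat \<Rightarrow> 'a::semiring_0) \<Rightarrow> (nat \<Rightarrow> nat \<Rightarrow> 'a) \<Rightarrow> nat \<Rightarrow> 'a" where
  "row_act n v M = (\<lambda>j. if j < n then (\<Sum>i<n. v i * M i j) else 0)"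

definition mult_ord :: "'a::monoid_mult \<Rightarrow> nat" where
  "mult_ord x = (LEAST m. 0 < m \<and> x ^ m = 1)"

(* D = diag(eta*lam, lam, eta*lam, ..., eta*lam)  (0-based: entry 1 is lam) *)
definition matD :: "nat \<Rightarrow> 'a::field \<Rightarrow> 'a \<Rightarrow> nat \<Rightarrow> nat \<Rightarrow> 'a" where
  "matD n eta lam = (\<lambda>i j. if i = j \<and> i < n then (if i = 1 then lam else eta * lam) else 0)"

(* P = [[0', I_{n-1}], [1, 0]]: P_{i,i+1} = 1 for i < n-1, P_{n-1,0} = 1 (0-based) *)
definition matP :: "nat \<Rightarrow> nat \<Rightarrow> nat \<Rightarrow> 'a::{zero,one}" where
  "matP n = (\<lambda>i j. if i < n \<and> j < n \<and> j = (i + 1) mod n then 1 else 0)"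

definition matA :: "nat \<Rightarrow> 'a::field \<Rightarrow> 'a \<Rightarrow> nat \<Rightarrow> nat \<Rightarrow> 'a" where
  "matA n eta lam = mat_mul n (matD n eta lam) (matP n)"

definition lin_code :: "nat \<Rightarrow> nat \<Rightarrow> (nat \<Rightarrow> 'a::field) set \<Rightarrow> bool" where
  "lin_code n k C \<longleftrightarrow> C \<subseteq> Fn n \<and> module.subspace vscale C \<and> vector_space.dim vscale C = k"

definition invariant_code :: "nat \<Rightarrow> (nat \<Rightarrow> nat \<Rightarrow> 'a::field) \<Rightarrow> (nat \<Rightarrow> 'a) set \<Rightarrow> bool" where
  "invariant_code n M C \<longleftrightarrow> (\<forall>v\<in>C. row_act n v M \<in> C)"

definition irreducible_code :: "nat \<Rightarrow> nat \<Rightarrow> (nat \<Rightarrow> nat \<Rightarrow> 'a::field) \<Rightarrow> (nat \<Rightarrow> 'a) set \<Rightarrow> bool" where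
  "irreducible_code n k M C \<longleftrightarrow> lin_code n k C \<and> invariant_code n M C \<and>
     \<not> (\<exists>C' k'. 1 \<le> k' \<and> k' < k \<and> lin_code n k' C' \<and> invariant_code n M C' \<and> C' \<subseteq> C)"

definition faithful_code :: "nat \<Rightarrow> (nat \<Rightarrow> nat \<Rightarrow> 'a::field) \<Rightarrow> (nat \<Rightarrow> 'a) set \<Rightarrow> bool" where
  "faithful_code n M C \<longleftrightarrow> (\<forall>m. (\<forall>v\<in>C. row_act n v (mat_pow n M m) = v) \<longrightarrow>
      (\<forall>i<n. \<forall>j<n. mat_pow n M m i j = id_mat i j))"

end

theory Submission
  imports Defs "HOL-Algebra.Multiplicative_Group"
begin


definition dd :: "'a::field \<Rightarrow> 'a \<Rightarrow> nat \<Rightarrow> 'a" where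
  "dd eta lam i = (if i = 1 then lam else eta * lam)"

definition TT :: "nat \<Rightarrow> 'a::field \<Rightarrow> 'a \<Rightarrow> (nat \<Rightarrow> 'a) \<Rightarrow> nat \<Rightarrow> 'a" where
  "TT n eta lam v = row_act n v (matA n eta lam)"

lemma matA_eq:
  assumes "i < n" "j < n"
  shows "matA n eta lam i j = (if j = (i + 1) mod n then dd eta lam i else 0)"
proof -
  have "matA n eta lam i j = (\<Sum>k<n. matD n eta lam i k * matP n k j)"
    by (simp add: matA_def mat_mul_def)
  also have "\<dots> = (\<Sum>k<n. if k = i then matD n eta lam i i * matP n i j else 0)"
    by (rule sum.cong) (auto simp: matD_def)
  also have "\<dots> = matD n eta lam i i * matP n i j" using assms by simp
  finally show ?thesis using assms by (simp add: matD_def matP_def dd_def)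
qed

lemma TT_out: "j \<ge> n \<Longrightarrow> TT n eta lam v j = 0"
  by (simp add: TT_def row_act_def)

lemma TT_step:
  assumes "i < n"
  shows "TT n eta lam v ((i + 1) mod n) = dd eta lam i * v i"
proof -
  have jn: "(i + 1) mod n < n" using assms by simp
  have eq: "\<And>k. k < n \<Longrightarrow> (Suc i mod n = Suc k mod n) = (k = i)"
  proof -
    fix k assume k: "k < n"
    show "(Suc i mod n = Suc k mod n) = (k = i)"
    proof
      assume h0: "Suc i mod n = Suc k mod n"
      then have h: "(i + 1) mod n = (k + 1) mod n" by simp
      show "k = i"
      proof (cases "i + 1 = n")
        case True
        then have "(k+1) mod n = 0" using h by simp
        then have "k + 1 = n" using k by (metis Suc_eq_plus1 Suc_leI le_neq_implies_less mod_less mod_self nat.distinct(1))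
        then show ?thesis using True by simp
      next
        case False
        then have "(i+1) mod n = i + 1" using assms by simp
        moreover have "k + 1 \<noteq> n"
        proof
          assume "k + 1 = n" then show False using h \<open>(i+1) mod n = i + 1\<close> by simp
        qed
        then have "(k+1) mod n = k + 1" using k by simp
        ultimately show ?thesis using h by simp
      qed
    qed simp
  qed
  have "TT n eta lam v ((i + 1) mod n) = (\<Sum>k<n. v k * matA n eta lam k ((i + 1) mod n))"
    using jn by (simp add: TT_def row_act_def)
  also have "\<dots> = (\<Sum>k<n. if k = i then v i * dd eta lam i else 0)"
    by (rule sum.cong) (auto simp: matA_eq jn eq)
  finally show ?thesis using assms by (simp add: mult.commute)
qed

lemma TT_add: "TT n eta lam (u + v) = TT n eta lam u + TT n eta lam v"
  by (rule ext) (simp add: TT_def row_act_def sum.distrib algebra_simps)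

lemma TT_scale: "TT n eta lam (vscale a v) = vscale a (TT n eta lam v)"
  by (rule ext) (simp add: TT_def row_act_def vscale_def sum_distrib_left algebra_simps)

lemma TT_zero: "TT n eta lam 0 = 0"
  by (rule ext) (simp add: TT_def row_act_def)

lemma TT_Fn: "TT n eta lam v \<in> Fn n"
  by (simp add: Fn_def TT_out)

lemma TT_sum: "TT n eta lam (\<Sum>i\<in>I. f i) = (\<Sum>i\<in>I. TT n eta lam (f i))"
proof (induction I rule: infinite_finite_induct)
  case (infinite A) then show ?case by (metis sum.infinite TT_zero)
next
  case empty then show ?case by (simp only: sum.empty TT_zero)
next
  case (insert x F) then show ?case by (metis sum.insert TT_add)
qed

lemma row_act_mul:
  assumes "v \<in> Fn n"
  shows "row_act n v (mat_mul n M N) = row_act n (row_act n v M) N"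
proof (rule ext)
  fix j
  show "row_act n v (mat_mul n M N) j = row_act n (row_act n v M) N j"
  proof (cases "j < n")
    case True
    have "row_act n v (mat_mul n M N) j = (\<Sum>i<n. \<Sum>k<n. v i * M i k * N k j)"
      using True by (simp add: row_act_def mat_mul_def sum_distrib_left mult.assoc)
    also have "\<dots> = (\<Sum>k<n. \<Sum>i<n. v i * M i k * N k j)" by (rule sum.swap)
    also have "\<dots> = row_act n (row_act n v M) N j"
      using True by (simp add: row_act_def sum_distrib_right)
    finally show ?thesis .
  qed (simp add: row_act_def)
qed

lemma row_act_id:
  fixes v :: "nat \<Rightarrow> 'a::semiring_1"
  assumes "v \<in> Fn n"
  shows "row_act n v id_mat = v"
proof (rule ext)
  fix j
  show "row_act n v id_mat j = v j"
  proof (cases "j < n")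
    case True
    have "row_act n v id_mat j = (\<Sum>i<n. v i * id_mat i j)"
      using True by (simp add: row_act_def)
    also have "\<dots> = (\<Sum>i<n. if i = j then v j else 0)"
      by (rule sum.cong) (auto simp: id_mat_def)
    finally have "row_act n v id_mat j = (\<Sum>i<n. if i = j then v j else 0)" .
    then show ?thesis using True by simp
  next
    case False then show ?thesis using assms by (simp add: row_act_def Fn_def)
  qed
qed

lemma row_act_Fn: "row_act n v M \<in> Fn n"
  by (simp add: Fn_def row_act_def)

lemma row_act_pow:
  assumes "v \<in> Fn n"
  shows "row_act n v (mat_pow n (matA n eta lam) m) = (TT n eta lam ^^ m) v"
proof (induction m)
  case 0 then show ?case using assms by (simp add: row_act_id)
next
  case (Suc m)
  have "row_act n v (mat_pow n (matA n eta lam) (Suc m))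
      = row_act n (row_act n v (mat_pow n (matA n eta lam) m)) (matA n eta lam)"
    using assms by (simp add: row_act_mul)
  then show ?case using Suc by (simp add: TT_def)
qed

definition unitv :: "nat \<Rightarrow> nat \<Rightarrow> 'a::{zero,one}" where
  "unitv i = (\<lambda>j. if j = i then 1 else 0)"

lemma row_act_unit:
  fixes M :: "nat \<Rightarrow> nat \<Rightarrow> 'a::semiring_1"
  assumes "i < n" "j < n"
  shows "row_act n (unitv i) M j = M i j"
proof -
  have "row_act n (unitv i) M j = (\<Sum>k<n. unitv i k * M k j)"
    using assms by (simp add: row_act_def)
  also have "\<dots> = (\<Sum>k<n. if k = i then M i j else 0)"
    by (rule sum.cong) (auto simp: unitv_def)
  finally have "row_act n (unitv i) M j = (\<Sum>k<n. if k = i then M i j else 0)" .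
  then show ?thesis using assms by simp
qed

lemma faithful_from_id:
  assumes "\<And>v. v \<in> Fn n \<Longrightarrow> (TT n eta lam ^^ m) v = v"
  shows "\<forall>i<n. \<forall>j<n. mat_pow n (matA n eta lam) m i j = id_mat i j"
proof (intro allI impI)
  fix i j assume ij: "i < n" "j < n"
  have u: "unitv i \<in> Fn n" using ij by (simp add: Fn_def unitv_def)
  have "mat_pow n (matA n eta lam) m i j = row_act n (unitv i) (mat_pow n (matA n eta lam) m) j"
    using ij by (simp add: row_act_unit)
  also have "\<dots> = unitv i j" using row_act_pow[OF u, of eta lam m] assms[OF u] by metis
  finally show "mat_pow n (matA n eta lam) m i j = id_mat i j" by (simp add: unitv_def id_mat_def)
qed



lemma mod_inj_shift:
  fixes a b j n :: nat
  assumes "a < n" "b < n" "(j + a) mod n = (j + b) mod n"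
  shows "a = b"
proof (cases "a \<le> b")
  case True
  then have "n dvd (j + b) - (j + a)" using assms(3) mod_eq_dvd_iff_nat[of "j+a" "j+b" n] by simp
  then have "n dvd b - a" by simp
  moreover have "b - a < n" using assms by simp
  ultimately have "b - a = 0" using nat_dvd_not_less by blast
  then show ?thesis using True by simp
next
  case False
  then have "n dvd (j + a) - (j + b)" using assms(3) mod_eq_dvd_iff_nat[of "j+b" "j+a" n] by simp
  then have "n dvd a - b" by simp
  moreover have "a - b < n" using assms by simp
  ultimately have "a - b = 0" using nat_dvd_not_less by blast
  then show ?thesis using False by simp
qed

lemma prod_rot:
  fixes f :: "nat \<Rightarrow> 'a::comm_monoid_mult"
  assumes "0 < n"
  shows "(\<Prod>t<n. f ((j + t) mod n)) = (\<Prod>t<n. f t)"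
proof -
  let ?g = "\<lambda>t. (j + t) mod n"
  have inj: "inj_on ?g {..<n}" by (auto simp: inj_on_def intro: mod_inj_shift)
  have sub: "?g ` {..<n} \<subseteq> {..<n}" using assms by auto
  have im: "?g ` {..<n} = {..<n}" by (rule endo_inj_surj[OF _ sub inj]) simp
  have "(\<Prod>t<n. f t) = prod f (?g ` {..<n})" using im by simp
  also have "\<dots> = (\<Prod>t<n. f ((j + t) mod n))" using prod.reindex[OF inj, of f] by (simp add: comp_def)
  finally show ?thesis by simp
qed

lemma TT_pow_formula:
  assumes "0 < n" "j < n"
  shows "(TT n eta lam ^^ k) v ((j + k) mod n) = (\<Prod>t<k. dd eta lam ((j + t) mod n)) * v j"
proof (induction k)
  case 0 then show ?case using assms by simp
next
  case (Suc k)
  let ?i = "(j + k) mod n"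
  have i: "?i < n" using assms by simp
  have e: "(?i + 1) mod n = (j + Suc k) mod n" by (simp add: mod_Suc_eq)
  have "(TT n eta lam ^^ Suc k) v ((j + Suc k) mod n) = TT n eta lam ((TT n eta lam ^^ k) v) ((?i + 1) mod n)"
    using e by simp
  also have "\<dots> = dd eta lam ?i * (TT n eta lam ^^ k) v ?i" by (rule TT_step[OF i])
  also have "\<dots> = (\<Prod>t<Suc k. dd eta lam ((j + t) mod n)) * v j" using Suc by (simp add: ac_simps)
  finally show ?case .
qed

lemma TT_pow_n:
  assumes "0 < n" "v \<in> Fn n"
  shows "(TT n eta lam ^^ n) v = vscale (\<Prod>t<n. dd eta lam t) v"
proof (rule ext)
  fix j
  show "(TT n eta lam ^^ n) v j = vscale (\<Prod>t<n. dd eta lam t) v j"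
  proof (cases "j < n")
    case True
    have "(TT n eta lam ^^ n) v j = (TT n eta lam ^^ n) v ((j + n) mod n)" using True by simp
    also have "\<dots> = (\<Prod>t<n. dd eta lam ((j + t) mod n)) * v j" by (rule TT_pow_formula[OF assms(1) True])
    also have "\<dots> = (\<Prod>t<n. dd eta lam t) * v j" using prod_rot[OF assms(1), of "dd eta lam" j] by simp
    finally show ?thesis by (simp add: vscale_def)
  next
    case False
    obtain m where m: "n = Suc m" using assms(1) by (cases n) auto
    have "(TT n eta lam ^^ n) v j = TT n eta lam ((TT n eta lam ^^ m) v) j" using m by simp
    also have "\<dots> = 0" using False by (simp add: TT_out)
    finally show ?thesis using False assms(2) by (simp add: vscale_def Fn_def)
  qed
qed

lemma TT_pow_scale: "(TT n eta lam ^^ m) (vscale a v) = vscale a ((TT n eta lam ^^ m) v)"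
  by (induction m) (simp_all add: TT_scale)

lemma TT_pow_add: "(TT n eta lam ^^ m) (u + v) = (TT n eta lam ^^ m) u + (TT n eta lam ^^ m) v"
proof (induction m)
  case 0 then show ?case by simp
next
  case (Suc m) then show ?case by (metis TT_add funpow.simps(2) comp_apply)
qed

lemma TT_pow_Fn: "v \<in> Fn n \<Longrightarrow> (TT n eta lam ^^ m) v \<in> Fn n"
  by (cases m) (simp_all add: TT_Fn)

lemma vscale_mult: "vscale a (vscale b v) = vscale (a * b) v"
  by (simp add: vscale_def mult.assoc)

lemma vscale_one: "vscale 1 v = v"
  by (simp add: vscale_def)

lemma TT_pow_nk:
  assumes "0 < n" "v \<in> Fn n"
  shows "(TT n eta lam ^^ (n * k)) v = vscale ((\<Prod>t<n. dd eta lam t) ^ k) v"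
proof (induction k)
  case 0 then show ?case by (simp add: vscale_one)
next
  case (Suc k)
  have "(TT n eta lam ^^ (n * Suc k)) v = (TT n eta lam ^^ n) ((TT n eta lam ^^ (n * k)) v)"
    by (simp add: funpow_add)
  also have "\<dots> = vscale (\<Prod>t<n. dd eta lam t) ((TT n eta lam ^^ (n * k)) v)"
    by (rule TT_pow_n[OF assms(1) TT_pow_Fn[OF assms(2)]])
  also have "\<dots> = vscale ((\<Prod>t<n. dd eta lam t) ^ Suc k) v" using Suc by (simp add: vscale_mult)
  finally show ?case .
qed

lemma prod_dd:
  assumes "2 \<le> n"
  shows "(\<Prod>t<n. dd eta lam t) = lam * (eta * lam) ^ (n - 1)"
proof -
  have "(\<Prod>t<n. dd eta lam t) = dd eta lam 1 * (\<Prod>t\<in>{..<n} - {1}. dd eta lam t)"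
    using assms by (subst prod.remove[of _ 1]) auto
  also have "(\<Prod>t\<in>{..<n} - {1}. dd eta lam t) = (\<Prod>t\<in>{..<n} - {1}. eta * lam)"
    by (rule prod.cong) (auto simp: dd_def)
  also have "\<dots> = (eta * lam) ^ (n - 1)" using assms by simp
  finally show ?thesis by (simp add: dd_def)
qed



lemma irr_ex: "\<exists>p::'a::{field,finite} \<times> 'a. \<forall>t. t * t \<noteq> fst p * t + snd p"
proof -
  define f where "f = (\<lambda>x::'a \<times> 'a. (fst x + snd x, - (fst x * snd x)))"
  have ne: "((0::'a), (1::'a)) \<noteq> (1, 0)" by simp
  have "f (0, 1) = f (1, 0)" by (simp add: f_def)
  then have "\<not> inj f" using ne unfolding inj_def by blast
  then have "\<not> surj f" using finite_surj_inj[of "UNIV :: ('a \<times> 'a) set" f] by auto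
  then obtain p where p: "p \<notin> range f" by blast
  have "\<forall>t. t * t \<noteq> fst p * t + snd p"
  proof (intro allI notI)
    fix t assume h: "t * t = fst p * t + snd p"
    have "snd p = - (t * (fst p - t))" using h by (simp add: algebra_simps)
    then have "f (t, fst p - t) = p" by (simp add: f_def prod_eq_iff)
    then show False using p by (metis rangeI)
  qed
  then show ?thesis by blast
qed

definition irrp :: "'a::{field,finite} \<times> 'a" where
  "irrp = (SOME p. \<forall>t. t * t \<noteq> fst p * t + snd p)"

definition ia :: "'a::{field,finite}" where "ia = fst irrp"
definition ib :: "'a::{field,finite}" where "ib = snd irrp"

lemma irr: "t * t \<noteq> ia * t + ib"
  using someI_ex[OF irr_ex] unfolding ia_def ib_def irrp_def by blast

definition nrm :: "'a::{field,finite} \<Rightarrow> 'a \<Rightarrow> 'a" where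
  "nrm a b = a * a + ia * a * b - ib * b * b"

lemma nrm_zero: "nrm a b = 0 \<Longrightarrow> a = 0 \<and> b = 0"
proof (rule ccontr)
  assume h: "nrm a b = 0" and nz: "\<not> (a = 0 \<and> b = 0)"
  show False
  proof (cases "b = 0")
    case True then show ?thesis using h nz by (simp add: nrm_def)
  next
    case b: False
    define t where "t = - a / b"
    have tb: "t * b = - a" using b by (simp add: t_def)
    have "(t * t - ia * t - ib) * (b * b) = (t*b)*(t*b) - ia*(t*b)*b - ib*b*b" by (simp add: algebra_simps)
    also have "\<dots> = (-a)*(-a) - ia*(-a)*b - ib*b*b" by (simp only: tb)
    also have "\<dots> = nrm a b" by (simp add: nrm_def algebra_simps)
    finally have "(t * t - ia * t - ib) * (b * b) = 0" using h by simp
    then have "t * t - ia * t - ib = 0" using b by simp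
    then have "t * t = ia * t + ib" by (simp add: algebra_simps)
    then show ?thesis using irr by blast
  qed
qed

datatype 'a qx = QX (qa: 'a) (qb: 'a)

instantiation qx :: ("{field,finite}") field
begin
definition "0 = QX 0 0"
definition "1 = QX 1 0"
definition "x + y = QX (qa x + qa y) (qb x + qb y)"
definition "x - y = QX (qa x - qa y) (qb x - qb y)"
definition "- x = QX (- qa x) (- qb x)"
definition "x * y = QX (qa x * qa y + ib * qb x * qb y) (qa x * qb y + qb x * qa y + ia * qb x * qb y)"
definition "inverse x = QX ((qa x + ia * qb x) / nrm (qa x) (qb x)) (- qb x / nrm (qa x) (qb x))"
definition "x div y = x * inverse (y :: 'a qx)"
instance
proof
  fix a b c :: "'a qx"
  show "a * b * c = a * (b * c)" by (simp add: times_qx_def algebra_simps)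
  show "a * b = b * a" by (simp add: times_qx_def algebra_simps)
  show "1 * a = a" by (simp add: times_qx_def one_qx_def)
  show "a + b + c = a + (b + c)" by (simp add: plus_qx_def algebra_simps)
  show "a + b = b + a" by (simp add: plus_qx_def algebra_simps)
  show "0 + a = a" by (simp add: plus_qx_def zero_qx_def)
  show "- a + a = 0" by (simp add: plus_qx_def zero_qx_def uminus_qx_def)
  show "a - b = a + - b" by (simp add: plus_qx_def minus_qx_def uminus_qx_def)
  show "(a + b) * c = a * c + b * c" by (simp add: plus_qx_def times_qx_def algebra_simps)
  show "(0::'a qx) \<noteq> 1" by (simp add: zero_qx_def one_qx_def)
  show "a div b = a * inverse b" by (simp add: divide_qx_def)
  show "inverse (0::'a qx) = 0" by (simp add: inverse_qx_def zero_qx_def nrm_def)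
  assume "a \<noteq> 0"
  then have n: "nrm (qa a) (qb a) \<noteq> 0" using nrm_zero[of "qa a" "qb a"]
    by (cases a) (auto simp: zero_qx_def)
  define N where "N = nrm (qa a) (qb a)"
  define x where "x = (qa a + ia * qb a) / N"
  define y where "y = - qb a / N"
  have xN: "x * N = qa a + ia * qb a" using n by (simp add: x_def N_def)
  have yN: "y * N = - qb a" using n by (simp add: y_def N_def)
  have "(x * qa a + ib * y * qb a) * N = (x * N) * qa a + ib * (y * N) * qb a" by (simp add: algebra_simps)
  also have "\<dots> = (qa a + ia * qb a) * qa a + ib * (- qb a) * qb a" by (simp only: xN yN)
  also have "\<dots> = N" by (simp add: N_def nrm_def algebra_simps)
  finally have 1: "x * qa a + ib * y * qb a = 1" using n by (simp add: N_def)
  have "(x * qb a + y * qa a + ia * y * qb a) * N = (x * N) * qb a + (y * N) * qa a + ia * (y * N) * qb a" by (simp add: algebra_simps)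
  also have "\<dots> = (qa a + ia * qb a) * qb a + (- qb a) * qa a + ia * (- qb a) * qb a" by (simp only: xN yN)
  also have "\<dots> = 0" by (simp add: algebra_simps)
  finally have 2: "x * qb a + y * qa a + ia * y * qb a = 0" using n by (simp add: N_def)
  show "inverse a * a = 1" using 1 2 by (simp add: inverse_qx_def times_qx_def one_qx_def x_def y_def N_def)
qed
end

lemma UNIV_qx: "(UNIV :: 'a qx set) = (\<lambda>(a, b). QX a b) ` UNIV"
  by (auto simp: image_iff) (metis qx.exhaust)

instance qx :: (finite) finite
  by standard (simp add: UNIV_qx)

lemma card_qx: "CARD('a::finite qx) = CARD('a) ^ 2"
proof -
  have "inj (\<lambda>(a::'a, b::'a). QX a b)" by (auto simp: inj_def)
  then have "CARD('a qx) = card (UNIV :: ('a \<times> 'a) set)" by (simp add: UNIV_qx card_image)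
  also have "\<dots> = CARD('a) ^ 2" by (metis UNIV_Times_UNIV card_cartesian_product power2_eq_square)
  finally show ?thesis .
qed

definition emb :: "'a::{field,finite} \<Rightarrow> 'a qx" where "emb a = QX a 0"
definition th :: "'a::{field,finite} qx" where "th = QX 0 1"

lemma emb_add: "emb (a + b) = emb a + emb b" by (simp add: emb_def plus_qx_def)
lemma emb_mult: "emb (a * b) = emb a * emb b" by (simp add: emb_def times_qx_def)
lemma emb_one: "emb 1 = 1" by (simp add: emb_def one_qx_def)
lemma emb_zero: "emb 0 = 0" by (simp add: emb_def zero_qx_def)
lemma emb_minus: "emb (a - b) = emb a - emb b" by (simp add: emb_def minus_qx_def)
lemma emb_uminus: "emb (- a) = - emb a" by (simp add: emb_def uminus_qx_def)
lemma emb_inj: "emb a = emb b \<longleftrightarrow> a = b" by (simp add: emb_def)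
lemma emb_eq0: "emb a = 0 \<longleftrightarrow> a = 0" by (simp add: emb_def zero_qx_def)
lemma emb_power: "emb (a ^ k) = emb a ^ k" by (induction k) (simp_all add: emb_one emb_mult)
lemma emb_divide: "emb (a / b) = emb a / emb b"
proof (cases "b = 0")
  case True then show ?thesis by (simp add: emb_zero)
next
  case False
  then have "emb b \<noteq> 0" by (simp add: emb_eq0)
  moreover have "emb (a / b) * emb b = emb a" using False by (simp add: emb_mult[symmetric])
  ultimately show ?thesis by (simp add: field_simps)
qed

lemma qx_decomp: "x = emb (qa x) + emb (qb x) * th"
  by (cases x) (simp add: emb_def th_def plus_qx_def times_qx_def)

lemma qb_lin: "qb (emb a * x + emb b * y) = a * qb x + b * qb y"
  by (simp add: emb_def plus_qx_def times_qx_def)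

lemma qb_add: "qb (x + y) = qb x + qb y" by (simp add: plus_qx_def)
lemma qb_scale: "qb (emb a * x) = a * qb x" by (simp add: emb_def times_qx_def)
lemma qb_th: "qb th = 1" by (simp add: th_def)
lemma qb_emb: "qb (emb a) = 0" by (simp add: emb_def)

lemma qb_nz: "d \<notin> range emb \<Longrightarrow> qb d \<noteq> 0"
  by (cases d) (auto simp: emb_def)

lemma span2:
  fixes d :: "'a::{field,finite} qx"
  assumes "d \<notin> range emb"
  shows "\<exists>a b. u = emb a + emb b * d"
proof -
  have y: "qb d \<noteq> 0" using qb_nz[OF assms] .
  have "u = emb (qa u - (qb u / qb d) * qa d) + emb (qb u / qb d) * d"
    using y by (cases u, cases d) (simp add: emb_def plus_qx_def times_qx_def)
  then show ?thesis by blast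
qed

lemma coeff_unique:
  fixes d :: "'a::{field,finite} qx"
  assumes "d \<notin> range emb" "emb a + emb b * d = emb a' + emb b' * d"
  shows "a = a' \<and> b = b'"
proof -
  have y: "qb d \<noteq> 0" using qb_nz[OF assms(1)] .
  have "qb (emb a + emb b * d) = qb (emb a' + emb b' * d)" using assms(2) by simp
  then have "b * qb d = b' * qb d" by (simp add: qb_add qb_scale qb_emb)
  then have "b = b'" using y by simp
  then show ?thesis using assms(2) by (simp add: emb_inj)
qed



definition tring :: "'a::field ring" where
  "tring = \<lparr>carrier = UNIV, monoid.mult = (\<lambda>x y. x * y), one = 1, ring.zero = 0, add = (\<lambda>x y. x + y)\<rparr>"

lemma tring_field: "field (tring :: 'a::field ring)"
proof -
  have "\<exists>y. x + y = 0" for x :: 'a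
    using add.right_inverse by blast
  moreover have "x \<noteq> 0 \<Longrightarrow> \<exists>y. x * y = 1" for x :: 'a
    by (rule exI[of _ "inverse x"]) auto
  ultimately show ?thesis
    unfolding tring_def using add.right_inverse
    by unfold_locales (auto simp: algebra_simps Units_def)
qed

lemma tring_pow: "x [^]\<^bsub>tring\<^esub> (i::nat) = (x::'a::field) ^ i"
proof -
  interpret field "tring :: 'a ring" by (rule tring_field)
  show ?thesis by (induction i) (simp_all add: tring_def)
qed

lemma field_gen: "\<exists>g::'a::{field,finite}. g \<noteq> 0 \<and> (\<forall>x. x \<noteq> 0 \<longrightarrow> (\<exists>i. x = g ^ i))"
proof -
  interpret field "tring :: 'a ring" by (rule tring_field)
  have fin: "finite (carrier (tring :: 'a ring))" unfolding tring_def by simp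
  have ex: "\<exists>a \<in> carrier (mult_of (tring :: 'a ring)). carrier (mult_of (tring :: 'a ring)) = {a [^]\<^bsub>tring\<^esub> i | i::nat. i \<in> UNIV}"
    by (rule finite_field_mult_group_has_gen[OF fin])
  then obtain a where a1: "a \<in> carrier (mult_of (tring :: 'a ring))"
    and a2: "carrier (mult_of (tring :: 'a ring)) = {a [^]\<^bsub>tring\<^esub> i | i::nat. i \<in> UNIV}"
    by (elim bexE) (rule that)
  have a0: "a \<noteq> 0" using a1 by (simp add: tring_def)
  have "\<forall>x. x \<noteq> 0 \<longrightarrow> (\<exists>i. x = a ^ i)"
  proof (intro allI impI)
    fix x :: 'a assume "x \<noteq> 0"
    then have "x \<in> carrier (mult_of (tring :: 'a ring))" by (simp add: tring_def)
    then have "x \<in> {a [^]\<^bsub>tring\<^esub> i | i::nat. i \<in> UNIV}" using a2 by (simp only:)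
    then obtain i :: nat where "x = a [^]\<^bsub>tring\<^esub> i" by blast
    then have "x = a ^ i" by (simp only: tring_pow)
    then show "\<exists>i. x = a ^ i" by blast
  qed
  then show ?thesis using a0 by blast
qed

lemma card_ge2: "2 \<le> CARD('a::{field,finite})"
proof -
  have "card {0::'a, 1} \<le> CARD('a)" by (rule card_mono) simp_all
  then show ?thesis by simp
qed

lemma fermat_field:
  fixes x :: "'a::{field,finite}"
  assumes "x \<noteq> 0"
  shows "x ^ (CARD('a) - 1) = 1"
proof -
  let ?S = "UNIV - {0::'a}"
  have cS: "card ?S = CARD('a) - 1" by (simp add: card_Diff_subset)
  have inj: "inj_on (\<lambda>y. x * y) ?S" using assms by (auto simp: inj_on_def)
  have im: "(\<lambda>y. x * y) ` ?S = ?S"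
  proof
    show "(\<lambda>y. x * y) ` ?S \<subseteq> ?S" using assms by auto
    show "?S \<subseteq> (\<lambda>y. x * y) ` ?S"
    proof
      fix z assume z: "z \<in> ?S"
      then have "z = x * (z / x)" "z / x \<in> ?S" using assms by auto
      then show "z \<in> (\<lambda>y. x * y) ` ?S" by blast
    qed
  qed
  have "prod (\<lambda>y. y) ?S = prod (\<lambda>y. y) ((\<lambda>y. x * y) ` ?S)" using im by simp
  also have "\<dots> = prod (\<lambda>y. x * y) ?S" using prod.reindex[OF inj, of "\<lambda>y. y"] by simp
  also have "\<dots> = x ^ card ?S * prod (\<lambda>y. y) ?S" by (simp add: prod.distrib)
  finally have "x ^ card ?S * prod (\<lambda>y. y) ?S = 1 * prod (\<lambda>y. y) ?S" by simp
  moreover have "prod (\<lambda>y. y) ?S \<noteq> 0" by (simp add: prod_zero_iff)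
  ultimately have "x ^ card ?S = 1" using mult_cancel_right[of "x ^ card ?S" "prod (\<lambda>y. y) ?S" 1] by simp
  then show ?thesis using cS by simp
qed

lemma mult_ord_props:
  fixes x :: "'a::{field,finite}"
  assumes "x \<noteq> 0"
  shows "0 < mult_ord x" "x ^ mult_ord x = 1" "x ^ k = 1 \<longleftrightarrow> mult_ord x dvd k"
proof -
  have ex: "0 < CARD('a) - 1 \<and> x ^ (CARD('a) - 1) = 1" using card_ge2[where 'a='a] fermat_field[OF assms] by simp
  have L: "0 < mult_ord x \<and> x ^ mult_ord x = 1"
    unfolding mult_ord_def by (rule LeastI[of _ "CARD('a) - 1"]) (rule ex)
  then show "0 < mult_ord x" "x ^ mult_ord x = 1" by auto
  show "x ^ k = 1 \<longleftrightarrow> mult_ord x dvd k"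
  proof
    assume h: "x ^ k = 1"
    let ?o = "mult_ord x"
    have "x ^ k = x ^ (?o * (k div ?o) + k mod ?o)" by simp
    also have "\<dots> = (x ^ ?o) ^ (k div ?o) * x ^ (k mod ?o)" by (simp only: power_add power_mult)
    finally have "x ^ k = (x ^ ?o) ^ (k div ?o) * x ^ (k mod ?o)" .
    then have r: "x ^ (k mod ?o) = 1" using h L by simp
    show "?o dvd k"
    proof (rule ccontr)
      assume "\<not> ?o dvd k"
      then have "0 < k mod ?o" by (simp add: dvd_eq_mod_eq_0)
      moreover have "k mod ?o < ?o" using L by simp
      moreover have "\<not> (0 < k mod ?o \<and> x ^ (k mod ?o) = 1)"
        using not_less_Least[of "k mod ?o" "\<lambda>m. 0 < m \<and> x ^ m = 1"] \<open>k mod ?o < ?o\<close>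
        unfolding mult_ord_def by simp
      ultimately show False using r by simp
    qed
  next
    assume "mult_ord x dvd k"
    then obtain c where "k = mult_ord x * c" by blast
    then show "x ^ k = 1" using L by (simp add: power_mult)
  qed
qed

lemma gen_order:
  fixes g :: "'a::{field,finite}"
  assumes g0: "g \<noteq> 0" and gen: "\<forall>x. x \<noteq> 0 \<longrightarrow> (\<exists>i. x = g ^ i)"
  shows "g ^ k = 1 \<longleftrightarrow> (CARD('a) - 1) dvd k"
proof -
  let ?o = "mult_ord g"
  have o: "0 < ?o" "g ^ ?o = 1" using mult_ord_props[OF g0] by auto
  have d: "?o dvd CARD('a) - 1" using mult_ord_props(3)[OF g0] fermat_field[OF g0] by simp
  have sub: "UNIV - {0} \<subseteq> (\<lambda>i. g ^ i) ` {..<?o}"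
  proof
    fix x assume "x \<in> (UNIV :: 'a set) - {0}"
    then obtain i where "x = g ^ i" using gen by auto
    also have "\<dots> = g ^ (?o * (i div ?o) + i mod ?o)" by simp
    also have "\<dots> = (g ^ ?o) ^ (i div ?o) * g ^ (i mod ?o)" by (simp only: power_add power_mult)
    also have "\<dots> = g ^ (i mod ?o)" using o by simp
    finally have "x = g ^ (i mod ?o)" .
    moreover have "i mod ?o \<in> {..<?o}" using o(1) by simp
    ultimately show "x \<in> (\<lambda>i. g ^ i) ` {..<?o}" by (rule image_eqI)
  qed
  have "CARD('a) - 1 = card (UNIV - {0::'a})" by (simp add: card_Diff_subset)
  also have "\<dots> \<le> card ((\<lambda>i. g ^ i) ` {..<?o})" by (rule card_mono[OF _ sub]) simp
  also have "\<dots> \<le> ?o" using card_image_le[of "{..<?o}" "\<lambda>i. g ^ i"] by simp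
  finally have "CARD('a) - 1 \<le> ?o" .
  moreover have "?o \<le> CARD('a) - 1" using d card_ge2[where 'a='a] by (simp add: dvd_imp_le)
  ultimately have "?o = CARD('a) - 1" by simp
  then show ?thesis using mult_ord_props(3)[OF g0] by simp
qed



interpretation VS: vector_space "vscale :: 'a::field \<Rightarrow> (nat \<Rightarrow> 'a) \<Rightarrow> (nat \<Rightarrow> 'a)"
  by unfold_locales (simp_all add: vscale_def fun_eq_iff algebra_simps)

definition ss :: "'a::field \<Rightarrow> 'a \<Rightarrow> nat \<Rightarrow> 'a" where
  "ss eta lam k = (\<Prod>t<k. dd eta lam t)"

definition Phi :: "nat \<Rightarrow> 'a::{field,finite} \<Rightarrow> 'a \<Rightarrow> 'a qx \<Rightarrow> 'a qx \<Rightarrow> nat \<Rightarrow> 'a" where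
  "Phi n eta lam g z = (\<lambda>k. if k < n then ss eta lam k * qb (z * inverse g ^ k) else 0)"

lemma dd_nz: "eta \<noteq> 0 \<Longrightarrow> lam \<noteq> 0 \<Longrightarrow> dd eta lam i \<noteq> 0"
  by (simp add: dd_def)

lemma ss_nz: "eta \<noteq> 0 \<Longrightarrow> lam \<noteq> 0 \<Longrightarrow> ss eta lam k \<noteq> 0"
  by (simp add: ss_def dd_nz)

lemma ss_Suc: "ss eta lam (Suc k) = dd eta lam k * ss eta lam k"
  by (simp add: ss_def)

lemma Phi_Fn: "Phi n eta lam g z \<in> Fn n"
  by (simp add: Phi_def Fn_def)

lemma Phi_add: "Phi n eta lam g (z + w) = Phi n eta lam g z + Phi n eta lam g w"
  by (rule ext) (simp add: Phi_def distrib_right qb_add algebra_simps)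

lemma Phi_scale: "Phi n eta lam g (emb a * z) = vscale a (Phi n eta lam g z)"
proof (rule ext)
  fix k
  have "qb (emb a * z * inverse g ^ k) = a * qb (z * inverse g ^ k)"
    by (simp only: mult.assoc qb_scale)
  then show "Phi n eta lam g (emb a * z) k = vscale a (Phi n eta lam g z) k"
    by (simp add: Phi_def vscale_def)
qed

lemma qb_zero: "qb 0 = 0" by (simp add: zero_qx_def)

lemma Phi_zero: "Phi n eta lam g 0 = 0"
  by (rule ext) (simp add: Phi_def qb_zero)

lemma Phi_diff: "Phi n eta lam g (z - w) = Phi n eta lam g z - Phi n eta lam g w"
proof -
  have "Phi n eta lam g (z - w) + Phi n eta lam g w = Phi n eta lam g z"
    by (simp add: Phi_add[symmetric])
  then show ?thesis by (simp add: eq_diff_eq)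
qed

lemma TT_Phi:
  fixes g :: "'a::{field,finite} qx"
  assumes n2: "2 \<le> n" and g0: "g \<noteq> 0" and gn: "g ^ n = emb (\<Prod>t<n. dd eta lam t)"
  shows "TT n eta lam (Phi n eta lam g z) = Phi n eta lam g (g * z)"
proof (rule ext)
  fix j
  let ?v = "Phi n eta lam g z"
  let ?h = "inverse g"
  have gh: "g * ?h = 1" using g0 by simp
  show "TT n eta lam ?v j = Phi n eta lam g (g * z) j"
  proof (cases "j < n")
    case False then show ?thesis by (simp add: TT_out Phi_def)
  next
    case True
    show ?thesis
    proof (cases j)
      case 0
      have i: "n - 1 < n" using n2 by simp
      have e: "(n - 1 + 1) mod n = 0" using n2 by simp
      have "TT n eta lam ?v j = dd eta lam (n - 1) * ?v (n - 1)"
        using TT_step[OF i, of eta lam ?v] e 0 by simp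
      also have "\<dots> = (dd eta lam (n - 1) * ss eta lam (n - 1)) * qb (z * ?h ^ (n - 1))"
        using i by (simp add: Phi_def)
      also have "dd eta lam (n - 1) * ss eta lam (n - 1) = (\<Prod>t<n. dd eta lam t)"
        using n2 ss_Suc[of eta lam "n - 1"] by (simp add: ss_def)
      also have "(\<Prod>t<n. dd eta lam t) * qb (z * ?h ^ (n - 1)) = qb (g ^ n * (z * ?h ^ (n - 1)))"
        by (simp add: gn qb_scale)
      also have "g ^ n * (z * ?h ^ (n - 1)) = g * z"
      proof -
        have "g ^ n = g * g ^ (n - 1)" using n2 by (metis Suc_diff_1 less_le_trans pos2 power_Suc)
        then have "g ^ n * (z * ?h ^ (n - 1)) = g * z * (g * ?h) ^ (n - 1)"
          by (simp add: power_mult_distrib algebra_simps)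
        then show ?thesis using gh by simp
      qed
      finally have "TT n eta lam ?v j = qb (g * z)" .
      moreover have "0 < n" using n2 by simp
      ultimately show ?thesis using 0 by (simp add: Phi_def ss_def)
    next
      case (Suc i)
      have i: "i < n" using True Suc by simp
      have e: "(i + 1) mod n = j" using True Suc by simp
      have "TT n eta lam ?v j = dd eta lam i * ?v i" using TT_step[OF i, of eta lam ?v] e by simp
      also have "\<dots> = ss eta lam j * qb (z * ?h ^ i)" using i Suc by (simp add: Phi_def ss_Suc)
      also have "z * ?h ^ i = g * z * ?h ^ j"
      proof -
        have hj: "?h ^ j = ?h ^ i * ?h" using Suc by (simp add: power_Suc2)
        have "g * z * ?h ^ j = z * ?h ^ i * (g * ?h)" unfolding hj by (simp add: algebra_simps)
        then have "g * z * ?h ^ j = z * ?h ^ i" by (simp only: gh mult_1_right)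
        then show ?thesis by (rule sym)
      qed
      finally show ?thesis using True by (simp add: Phi_def)
    qed
  qed
qed

lemma TT_pow_Phi:
  fixes g :: "'a::{field,finite} qx"
  assumes n2: "2 \<le> n" and g0: "g \<noteq> 0" and gn: "g ^ n = emb (\<Prod>t<n. dd eta lam t)"
  shows "(TT n eta lam ^^ m) (Phi n eta lam g z) = Phi n eta lam g (g ^ m * z)"
proof (induction m)
  case 0 then show ?case by simp
next
  case (Suc m)
  then show ?case using TT_Phi[OF assms, of "g ^ m * z"] by (simp add: mult.assoc)
qed

lemma not_emb_inverse:
  fixes g :: "'a::{field,finite} qx"
  assumes "g \<notin> range emb"
  shows "inverse g \<notin> range emb"
proof
  assume "inverse g \<in> range emb"
  then obtain a where a: "inverse g = emb a" by auto
  then have "g = inverse (emb a)" by (metis inverse_inverse_eq)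
  also have "\<dots> = emb (inverse a)"
    by (metis emb_divide emb_one inverse_eq_divide)
  finally show False using assms by auto
qed

lemma Phi_inj0:
  fixes g :: "'a::{field,finite} qx"
  assumes n2: "2 \<le> n" and eta: "eta \<noteq> 0" and lam: "lam \<noteq> 0" and ge: "g \<notin> range emb"
    and z: "Phi n eta lam g z = 0"
  shows "z = 0"
proof (rule ccontr)
  assume z0: "z \<noteq> 0"
  let ?h = "inverse g"
  have q0: "qb z = 0" using fun_cong[OF z, of 0] n2 by (simp add: Phi_def ss_def)
  have q1: "qb (z * ?h) = 0" using fun_cong[OF z, of 1] n2 ss_nz[OF eta lam, of 1] by (simp add: Phi_def)
  obtain a b where ab: "th * inverse z = emb a + emb b * ?h" using span2[OF not_emb_inverse[OF ge]] by blast
  have "th = (emb a + emb b * ?h) * z" using ab z0 by (metis divide_inverse nonzero_eq_divide_eq)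
  then have "th = emb a * z + emb b * (z * ?h)" by (simp add: algebra_simps)
  then have "qb th = qb (emb a * z + emb b * (z * ?h))" by simp
  also have "\<dots> = a * qb z + b * qb (z * ?h)" by (rule qb_lin)
  finally have "qb th = a * qb z + b * qb (z * ?h)" .
  then have "qb (th :: 'a qx) = 0" using q0 q1 by simp
  then show False using qb_th[where 'a='a] by simp
qed

lemma Phi_inj:
  fixes g :: "'a::{field,finite} qx"
  assumes n2: "2 \<le> n" and eta: "eta \<noteq> 0" and lam: "lam \<noteq> 0" and ge: "g \<notin> range emb"
    and z: "Phi n eta lam g z = Phi n eta lam g w"
  shows "z = w"
  using Phi_inj0[OF n2 eta lam ge, of "z - w"] z by (simp add: Phi_diff)



lemma g_nz: "g \<notin> range emb \<Longrightarrow> g \<noteq> 0"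
proof
  assume "g \<notin> range emb" "g = 0"
  moreover have "(0::'a qx) \<in> range emb" using emb_zero[where 'a='a] by (metis rangeI)
  ultimately show False by simp
qed

lemma subspace_Phi: "VS.subspace (range (Phi n eta lam g))"
proof (rule VS.subspaceI)
  show "0 \<in> range (Phi n eta lam g)" using Phi_zero[of n eta lam g] by (metis rangeI)
  show "x + y \<in> range (Phi n eta lam g)" if hx: "x \<in> range (Phi n eta lam g)" and hy: "y \<in> range (Phi n eta lam g)" for x y
  proof -
    obtain a where "x = Phi n eta lam g a" using hx by blast
    moreover obtain b where "y = Phi n eta lam g b" using hy by blast
    ultimately have "x + y = Phi n eta lam g (a + b)" by (simp add: Phi_add)
    then show ?thesis by blast
  qed
  show "vscale c x \<in> range (Phi n eta lam g)" if hx: "x \<in> range (Phi n eta lam g)" for c x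
  proof -
    obtain a where "x = Phi n eta lam g a" using hx by blast
    then have "vscale c x = Phi n eta lam g (emb c * a)" by (simp add: Phi_scale)
    then show ?thesis by blast
  qed
qed

lemma dim_Phi:
  fixes g :: "'a::{field,finite} qx"
  assumes n2: "2 \<le> n" and eta: "eta \<noteq> 0" and lam: "lam \<noteq> 0" and ge: "g \<notin> range emb"
  shows "VS.dim (range (Phi n eta lam g)) = 2"
proof -
  let ?P = "Phi n eta lam g"
  let ?B = "{?P 1, ?P th}"
  have inj: "\<And>z w. ?P z = ?P w \<Longrightarrow> z = w" by (rule Phi_inj[OF n2 eta lam ge])
  have th1: "(1::'a qx) \<noteq> th" by (simp add: one_qx_def th_def)
  have ne: "?P 1 \<noteq> ?P th"
  proof
    assume "?P 1 = ?P th"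
    then have "(1::'a qx) = th" by (rule inj)
    with th1 show False by simp
  qed
  have B: "?B \<subseteq> range ?P" by auto
  have span: "range ?P \<subseteq> VS.span ?B"
  proof
    fix v assume "v \<in> range ?P"
    then obtain z where z: "v = ?P z" by auto
    have "emb (qa z) * 1 + emb (qb z) * th = z" using qx_decomp[of z, symmetric] by (simp only: mult_1_right)
    then have "?P z = ?P (emb (qa z) * 1 + emb (qb z) * th)" by (simp only:)
    also have "\<dots> = vscale (qa z) (?P 1) + vscale (qb z) (?P th)" by (simp only: Phi_add Phi_scale)
    finally have e: "?P z = vscale (qa z) (?P 1) + vscale (qb z) (?P th)" .
    have s1: "vscale (qa z) (?P 1) \<in> VS.span ?B" by (rule VS.span_scale, rule VS.span_base, rule insertI1)
    have s2: "vscale (qb z) (?P th) \<in> VS.span ?B" by (rule VS.span_scale, rule VS.span_base, rule insertI2, rule singletonI)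
    have "?P z \<in> VS.span ?B" unfolding e by (rule VS.span_add[OF s1 s2])
    then show "v \<in> VS.span ?B" using z by (simp only:)
  qed
  have indep: "VS.independent ?B"
  proof -
    have "?P th \<noteq> 0"
    proof
      assume "?P th = 0"
      then have "(th::'a qx) = 0" by (rule Phi_inj0[OF n2 eta lam ge])
      then show False by (simp add: th_def zero_qx_def)
    qed
    then have i1: "VS.independent {?P th}" by (simp only: VS.dependent_single not_False_eq_True)
    have "?P 1 \<notin> VS.span {?P th}"
    proof
      assume "?P 1 \<in> VS.span {?P th}"
      then obtain k where "?P 1 = vscale k (?P th)" by (auto simp: VS.span_singleton)
      then have "?P 1 = ?P (emb k * th)" by (simp add: Phi_scale)
      then have "1 = emb k * th" by (rule inj)
      then have "qb (1::'a qx) = qb (emb k * th)" by simp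
      then have "(0::'a) = k" by (simp add: qb_scale qb_th one_qx_def)
      then have "(1::'a qx) = 0" using \<open>1 = emb k * th\<close> by (simp add: emb_zero)
      then show False by simp
    qed
    then show ?thesis using i1 ne by (simp add: VS.independent_insert)
  qed
  show ?thesis by (rule VS.dim_unique[OF B span indep]) (simp add: ne)
qed

lemma dim_zero_set: "VS.dim {0 :: nat \<Rightarrow> 'a::field} = 0"
proof -
  have "VS.span {} = VS.span {0 :: nat \<Rightarrow> 'a}" by simp
  then have "VS.dim {0 :: nat \<Rightarrow> 'a} = card ({} :: (nat \<Rightarrow> 'a) set)"
    by (rule VS.dim_eq_card) (rule VS.independent_empty)
  then show ?thesis by simp
qed

lemma code_props:
  fixes g :: "'a::{field,finite} qx"
  assumes n2: "2 \<le> n" and eta: "eta \<noteq> 0" and lam: "lam \<noteq> 0" and ge: "g \<notin> range emb"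
    and gn: "g ^ n = emb (\<Prod>t<n. dd eta lam t)"
    and ord: "\<And>k. g ^ k = 1 \<Longrightarrow> (\<forall>v\<in>Fn n. (TT n eta lam ^^ k) v = v)"
  shows "faithful_code n (matA n eta lam) (range (Phi n eta lam g)) \<and>
         irreducible_code n 2 (matA n eta lam) (range (Phi n eta lam g))"
proof -
  let ?P = "Phi n eta lam g"
  let ?C = "range ?P"
  have g0: "g \<noteq> 0" using g_nz[OF ge] .
  have inj: "\<And>z w. ?P z = ?P w \<Longrightarrow> z = w" by (rule Phi_inj[OF n2 eta lam ge])
  have lin: "lin_code n 2 ?C"
    unfolding lin_code_def using Phi_Fn subspace_Phi dim_Phi[OF n2 eta lam ge] by blast
  have inv: "invariant_code n (matA n eta lam) ?C"
    unfolding invariant_code_def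
  proof
    fix v assume "v \<in> ?C"
    then obtain z where z: "v = ?P z" by auto
    have "row_act n v (matA n eta lam) = TT n eta lam v" by (simp add: TT_def)
    also have "\<dots> = ?P (g * z)" using z TT_Phi[OF n2 g0 gn] by simp
    finally show "row_act n v (matA n eta lam) \<in> ?C" by simp
  qed
  have irr: "\<not> (\<exists>C' k'. 1 \<le> k' \<and> k' < 2 \<and> lin_code n k' C' \<and> invariant_code n (matA n eta lam) C' \<and> C' \<subseteq> ?C)"
  proof
    assume "\<exists>C' k'. 1 \<le> k' \<and> k' < 2 \<and> lin_code n k' C' \<and> invariant_code n (matA n eta lam) C' \<and> C' \<subseteq> ?C"
    then obtain C' k' where k': "1 \<le> k'" "k' < 2" and l0: "lin_code n k' C'" and i: "invariant_code n (matA n eta lam) C'" and s: "C' \<subseteq> ?C"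
      by blast
    have "k' = 1" using k' by simp
    then have l: "lin_code n 1 C'" using l0 by simp
    have sub: "VS.subspace C'" and d1: "VS.dim C' = 1" using l by (auto simp: lin_code_def)
    obtain B where B: "B \<subseteq> C'" "VS.independent B" "C' \<subseteq> VS.span B" "card B = VS.dim C'"
      by (rule VS.basis_exists)
    then obtain b where b: "B = {b}" using d1 by (auto simp: card_Suc_eq)
    have "\<exists>v\<in>C'. v \<noteq> 0"
    proof (rule ccontr)
      assume "\<not> (\<exists>v\<in>C'. v \<noteq> 0)"
      then have "C' \<subseteq> {0}" by auto
      then have "b = 0" using B(1) b by auto
      then show False using B(2) b by simp
    qed
    then obtain v where v: "v \<in> C'" "v \<noteq> 0" by blast
    obtain z where z: "v = ?P z" using v s by auto
    have z0: "z \<noteq> 0" using z v(2) by (auto simp: Phi_zero)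
    have tv: "TT n eta lam v \<in> C'" using i v(1) by (simp add: invariant_code_def TT_def)
    obtain k1 where k1: "v = vscale k1 b" using B(3) v(1) b by (auto simp: VS.span_singleton)
    obtain k2 where k2: "TT n eta lam v = vscale k2 b" using B(3) tv b by (auto simp: VS.span_singleton)
    have "k1 \<noteq> 0" using k1 v(2) by (auto simp: vscale_def fun_eq_iff)
    then have "TT n eta lam v = vscale (k2 / k1) v" using k1 k2 by (simp add: vscale_mult)
    then have "?P (g * z) = ?P (emb (k2 / k1) * z)" using z TT_Phi[OF n2 g0 gn] by (simp add: Phi_scale)
    then have "g * z = emb (k2 / k1) * z" by (rule inj)
    then have "g = emb (k2 / k1)" using z0 by simp
    then show False using ge by auto
  qed
  have faith: "faithful_code n (matA n eta lam) ?C"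
    unfolding faithful_code_def
  proof (rule allI, rule impI)
    fix m assume h: "\<forall>v\<in>?C. row_act n v (mat_pow n (matA n eta lam) m) = v"
    have "row_act n (?P 1) (mat_pow n (matA n eta lam) m) = ?P 1" using h by simp
    then have "(TT n eta lam ^^ m) (?P 1) = ?P 1" by (simp add: row_act_pow Phi_Fn)
    then have "?P (g ^ m) = ?P 1" using TT_pow_Phi[OF n2 g0 gn] by simp
    then have "g ^ m = 1" by (rule inj)
    then have "\<forall>v\<in>Fn n. (TT n eta lam ^^ m) v = v" by (rule ord)
    then show "\<forall>i<n. \<forall>j<n. mat_pow n (matA n eta lam) m i j = id_mat i j"
      using faithful_from_id[where n=n and eta=eta and lam=lam and m=m] by blast
  qed
  show ?thesis using lin inv irr faith unfolding irreducible_code_def by blast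
qed



lemma coprime_add_multiple:
  fixes j N :: nat
  shows "coprime (j + N) N \<longleftrightarrow> coprime j N"
  by (metis coprime_iff_gcd_eq_1 gcd_add1)

lemma order_c:
  fixes eta lam :: "'a::{field,finite}"
  assumes eta0: "eta \<noteq> 0" and lam0: "lam \<noteq> 0"
    and gen: "{eta ^ i * lam ^ j | i j. True} = {x::'a. x \<noteq> 0}"
    and lam_odd: "odd (mult_ord lam)"
    and eta_2pow: "\<exists>e. mult_ord eta = 2 ^ e"
    and cm: "(eta ^ CARD('a) * lam ^ (CARD('a) + 1)) ^ m = 1"
  shows "(CARD('a) - 1) dvd m"
proof -
  let ?q = "CARD('a)"
  let ?N = "CARD('a) - 1"
  let ?E = "mult_ord eta"
  let ?L = "mult_ord lam"
  have q2: "2 \<le> ?q" by (rule card_ge2)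
  have E: "0 < ?E" "eta ^ ?E = 1" "\<And>k. eta ^ k = 1 \<longleftrightarrow> ?E dvd k" using mult_ord_props[OF eta0] by auto
  have L: "0 < ?L" "lam ^ ?L = 1" "\<And>k. lam ^ k = 1 \<longleftrightarrow> ?L dvd k" using mult_ord_props[OF lam0] by auto
  have EN: "?E dvd ?N" using E(3) fermat_field[OF eta0] by simp
  have LN: "?L dvd ?N" using L(3) fermat_field[OF lam0] by simp
  obtain e where e: "?E = 2 ^ e" using eta_2pow by blast
  have cEL: "coprime ?E ?L" using e lam_odd by simp
  have ELN: "?E * ?L dvd ?N" by (rule divides_mult[OF EN LN cEL])
  have sub: "UNIV - {0} \<subseteq> (\<lambda>(i, j). eta ^ i * lam ^ j) ` ({..<?E} \<times> {..<?L})"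
  proof
    fix x :: 'a assume "x \<in> UNIV - {0}"
    then have "x \<in> {eta ^ i * lam ^ j | i j. True}" using gen by simp
    then obtain i j where x: "x = eta ^ i * lam ^ j" by blast
    have "eta ^ i = (eta ^ ?E) ^ (i div ?E) * eta ^ (i mod ?E)"
      by (metis div_mult_mod_eq power_add power_mult mult.commute)
    then have ei: "eta ^ i = eta ^ (i mod ?E)" using E by simp
    have "lam ^ j = (lam ^ ?L) ^ (j div ?L) * lam ^ (j mod ?L)"
      by (metis div_mult_mod_eq power_add power_mult mult.commute)
    then have lj: "lam ^ j = lam ^ (j mod ?L)" using L by simp
    have "x = (\<lambda>(i, j). eta ^ i * lam ^ j) (i mod ?E, j mod ?L)" using x ei lj by simp
    moreover have "(i mod ?E, j mod ?L) \<in> {..<?E} \<times> {..<?L}" using E L by simp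
    ultimately show "x \<in> (\<lambda>(i, j). eta ^ i * lam ^ j) ` ({..<?E} \<times> {..<?L})" by (rule image_eqI)
  qed
  have "?N = card (UNIV - {0::'a})" by (simp add: card_Diff_subset)
  also have "\<dots> \<le> card ((\<lambda>(i, j). eta ^ i * lam ^ j) ` ({..<?E} \<times> {..<?L}))"
    by (rule card_mono[OF _ sub]) simp
  also have "\<dots> \<le> card ({..<?E} \<times> {..<?L})" by (rule card_image_le) simp
  also have "\<dots> = ?E * ?L" by (simp add: card_cartesian_product)
  finally have le: "?N \<le> ?E * ?L" .
  have Npos: "0 < ?N" using q2 by simp
  have ELeq: "?E * ?L = ?N" using ELN le Npos by (simp add: dvd_imp_le le_antisym)
  have "(eta ^ ?q * lam ^ (?q + 1)) ^ (m * ?L) = 1" using cm by (simp add: power_mult)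
  moreover have "(eta ^ ?q * lam ^ (?q + 1)) ^ (m * ?L) = eta ^ (?q * m * ?L) * (lam ^ ?L) ^ ((?q + 1) * m)"
  proof -
    have "(eta ^ ?q * lam ^ (?q + 1)) ^ (m * ?L) = eta ^ (?q * (m * ?L)) * lam ^ ((?q + 1) * (m * ?L))"
      by (simp only: power_mult_distrib power_mult)
    also have "(?q + 1) * (m * ?L) = ?L * ((?q + 1) * m)" by (simp only: ac_simps)
    also have "?q * (m * ?L) = ?q * m * ?L" by (simp add: ac_simps)
    finally show ?thesis by (simp only: power_mult)
  qed
  ultimately have "eta ^ (?q * m * ?L) = 1" using L by simp
  then have "?E dvd ?q * m * ?L" using E by simp
  moreover have "coprime ?E ?q"
  proof -
    have "coprime ?N ?q" using q2 coprime_add_one_right[of ?N] by simp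
    then show ?thesis using EN by (metis coprime_commute coprime_imp_coprime dvd_trans)
  qed
  ultimately have Em: "?E dvd m" using cEL by (simp add: coprime_dvd_mult_left_iff coprime_dvd_mult_right_iff)
  have "(eta ^ ?q * lam ^ (?q + 1)) ^ (m * ?E) = 1" using cm by (simp add: power_mult)
  moreover have "(eta ^ ?q * lam ^ (?q + 1)) ^ (m * ?E) = (eta ^ ?E) ^ (?q * m) * lam ^ ((?q + 1) * m * ?E)"
  proof -
    have "(eta ^ ?q * lam ^ (?q + 1)) ^ (m * ?E) = eta ^ (?q * (m * ?E)) * lam ^ ((?q + 1) * (m * ?E))"
      by (simp only: power_mult_distrib power_mult)
    also have "?q * (m * ?E) = ?E * (?q * m)" by (simp add: ac_simps)
    also have "(?q + 1) * (m * ?E) = (?q + 1) * m * ?E" by (simp only: mult.assoc)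
    finally show ?thesis by (simp only: power_mult)
  qed
  ultimately have "lam ^ ((?q + 1) * m * ?E) = 1" using E by simp
  then have Ld: "?L dvd (?q + 1) * m * ?E" using L by simp
  have cLq: "coprime ?L (?q + 1)"
  proof -
    let ?d = "gcd ?L (?q + 1)"
    have d1: "?d dvd ?N" using LN by (meson dvd_trans gcd_dvd1)
    have d2: "?d dvd ?q + 1" by simp
    have "?q + 1 = ?N + 2" using q2 by simp
    then have d2': "?d dvd 2" using d1 d2 by (metis dvd_add_right_iff)
    have od: "odd ?d"
    proof
      assume "even ?d"
      then have "2 dvd ?L" using gcd_dvd1 dvd_trans by blast
      then show False using lam_odd by simp
    qed
    have "?d \<le> 2" using d2' by (rule dvd_imp_le) simp
    moreover have "?d \<noteq> 0" using d2' by auto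
    moreover have "?d \<noteq> 2"
    proof
      assume h: "?d = 2"
      have "even ?d" unfolding h by (rule dvd_refl)
      with od show False by contradiction
    qed
    ultimately have "?d = 1" by linarith
    then show ?thesis by (simp add: coprime_iff_gcd_eq_1)
  qed
  have cLE: "coprime ?L ?E" using cEL by (simp add: coprime_commute)
  have "?L dvd (?q + 1) * m" using Ld coprime_dvd_mult_left_iff[OF cLE] by blast
  then have Lm: "?L dvd m" using coprime_dvd_mult_right_iff[OF cLq] by blast
  have "?E * ?L dvd m" by (rule divides_mult[OF Em Lm cEL])
  then show ?thesis using ELeq by simp
qed



lemma sq_minus_one: "(q::nat) ^ 2 - 1 = (q + 1) * (q - 1)"
  by (cases q) (simp_all add: power2_eq_square algebra_simps)

lemma coprime_add_mult_multiple:
  fixes j N t :: nat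
  shows "coprime (j + N * t) N \<longleftrightarrow> coprime j N"
proof -
  have "gcd N (t * N + j) = gcd N j" by (rule gcd_add_mult)
  then show ?thesis by (simp add: coprime_iff_gcd_eq_1 gcd.commute ac_simps)
qed

lemma c_formula:
  fixes eta lam :: "'a::field"
  assumes "2 \<le> q"
  shows "(\<Prod>t<q + 1. dd eta lam t) = eta ^ q * lam ^ (q + 1)"
proof -
  have "(\<Prod>t<q + 1. dd eta lam t) = lam * (eta * lam) ^ (q + 1 - 1)" by (rule prod_dd) (use assms in simp)
  also have "\<dots> = eta ^ q * lam ^ (q + 1)" by (simp add: power_mult_distrib ac_simps)
  finally show ?thesis .
qed

lemma TT_period:
  fixes eta lam :: "'a::{field,finite}"
  assumes c0: "(\<Prod>t<CARD('a) + 1. dd eta lam t) \<noteq> 0"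
    and v: "v \<in> Fn (CARD('a) + 1)" and k: "(CARD('a) ^ 2 - 1) dvd k"
  shows "(TT (CARD('a) + 1) eta lam ^^ k) v = v"
proof -
  let ?q = "CARD('a)"
  let ?c = "\<Prod>t<CARD('a) + 1. dd eta lam t"
  obtain t where t: "k = (?q ^ 2 - 1) * t" using k by blast
  have "k = (?q + 1) * ((?q - 1) * t)" using t by (simp only: sq_minus_one mult.assoc)
  then have "(TT (?q + 1) eta lam ^^ k) v = vscale (?c ^ ((?q - 1) * t)) v"
    using TT_pow_nk[where n="?q + 1" and v=v and eta=eta and lam=lam and k="(?q - 1) * t"] v by simp
  also have "?c ^ ((?q - 1) * t) = 1" using fermat_field[OF c0] by (simp add: power_mult)
  finally show ?thesis by (simp add: vscale_one)
qed

lemma card_qx_minus: "CARD('a::{field,finite} qx) - 1 = (CARD('a) + 1) * (CARD('a) - 1)"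
  by (simp only: card_qx sq_minus_one)

lemma exists_j:
  fixes c :: "'a::{field,finite}" and g :: "'a qx"
  assumes c0: "c \<noteq> 0" and cord: "\<And>m. c ^ m = 1 \<Longrightarrow> (CARD('a) - 1) dvd m"
    and g0: "g \<noteq> 0" and gen: "\<forall>x. x \<noteq> 0 \<longrightarrow> (\<exists>i. x = g ^ i)"
  shows "\<exists>j. emb c = g ^ ((CARD('a) + 1) * j) \<and> coprime j (CARD('a) - 1)"
proof -
  let ?q = "CARD('a)"
  let ?N = "CARD('a) - 1"
  have q2: "2 \<le> ?q" by (rule card_ge2)
  have N0: "0 < ?N" using q2 by simp
  have go: "\<And>k. g ^ k = 1 \<longleftrightarrow> (?q + 1) * ?N dvd k"
    by (simp only: gen_order[OF g0 gen] card_qx_minus)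
  have "emb c \<noteq> 0" using c0 by (simp add: emb_eq0)
  then obtain k0 where k0: "emb c = g ^ k0" using gen by blast
  have "g ^ (k0 * ?N) = (emb c) ^ ?N" by (simp only: k0 power_mult)
  also have "\<dots> = emb (c ^ ?N)" by (simp only: emb_power)
  also have "\<dots> = 1" using fermat_field[OF c0] by (simp add: emb_one)
  finally have "(?q + 1) * ?N dvd k0 * ?N" by (simp only: go)
  then have "(?q + 1) dvd k0" using N0 by (simp only: dvd_times_right_cancel_iff neq0_conv)
  then obtain j where j: "k0 = (?q + 1) * j" by blast
  have "coprime j ?N"
  proof -
    define d where "d = gcd j ?N"
    obtain m where m: "?N = d * m" unfolding d_def by (meson gcd_dvd2 dvd_def)
    obtain j' where j': "j = d * j'" unfolding d_def by (meson gcd_dvd1 dvd_def)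
    have "j * m = (d * j') * m" by (simp only: j')
    also have "\<dots> = j' * (d * m)" by (simp only: ac_simps)
    also have "\<dots> = j' * ?N" by (simp only: m)
    finally have jm: "j * m = j' * ?N" .
    have "emb (c ^ m) = (g ^ ((?q + 1) * j)) ^ m" by (simp only: emb_power k0 j)
    also have "\<dots> = g ^ ((?q + 1) * (j * m))" by (simp only: power_mult mult.assoc)
    also have "\<dots> = g ^ ((?q + 1) * ?N * j')" using jm by (simp add: ac_simps)
    also have "\<dots> = 1" using go by simp
    finally have "c ^ m = 1" by (metis emb_inj emb_one)
    then have "?N dvd m" by (rule cord)
    moreover have "0 < m" using m N0 by (metis gr0I mult_0_right)
    ultimately have "?N \<le> m" by (simp add: dvd_imp_le)
    then have "d * m \<le> 1 * m" using m by simp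
    then have "d \<le> 1" using \<open>0 < m\<close> by simp
    moreover have "d \<noteq> 0" using N0 by (simp add: d_def)
    ultimately have "d = 1" by simp
    then show ?thesis by (simp add: coprime_iff_gcd_eq_1 d_def)
  qed
  then show ?thesis using k0 j by blast
qed

lemma good_from_exp:
  fixes c :: "'a::{field,finite}" and g :: "'a qx"
  assumes g0: "g \<noteq> 0" and gen: "\<forall>x. x \<noteq> 0 \<longrightarrow> (\<exists>i. x = g ^ i)"
    and cop: "coprime e ((CARD('a) + 1) * (CARD('a) - 1))"
  shows "g ^ e \<notin> range emb" "\<And>k. (g ^ e) ^ k = 1 \<Longrightarrow> (CARD('a) ^ 2 - 1) dvd k"
proof -
  let ?q = "CARD('a)"
  let ?N = "CARD('a) - 1"
  let ?Q = "(?q + 1) * ?N"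
  have q2: "2 \<le> ?q" by (rule card_ge2)
  have go: "\<And>k. g ^ k = 1 \<longleftrightarrow> ?Q dvd k"
    by (simp only: gen_order[OF g0 gen] card_qx_minus)
  show ord: "\<And>k. (g ^ e) ^ k = 1 \<Longrightarrow> (CARD('a) ^ 2 - 1) dvd k"
  proof -
    fix k assume "(g ^ e) ^ k = 1"
    then have "g ^ (e * k) = 1" by (simp only: power_mult)
    then have "?Q dvd e * k" by (simp only: go)
    then have "?Q dvd k" using cop by (metis coprime_commute coprime_dvd_mult_right_iff)
    then show "(CARD('a) ^ 2 - 1) dvd k" by (simp only: sq_minus_one)
  qed
  show "g ^ e \<notin> range emb"
  proof
    assume "g ^ e \<in> range emb"
    then obtain a where a: "g ^ e = emb a" by auto
    have "a \<noteq> 0" using a g0 by (metis emb_zero power_not_zero)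
    then have "(g ^ e) ^ ?N = emb (a ^ ?N)" using a by (simp only: emb_power)
    also have "\<dots> = 1" using fermat_field[OF \<open>a \<noteq> 0\<close>] by (simp add: emb_one)
    finally have "(g ^ e) ^ ?N = 1" .
    then have "(CARD('a) ^ 2 - 1) dvd ?N" by (rule ord)
    then have "?Q dvd ?N" by (simp only: sq_minus_one)
    then have "?Q \<le> ?N" using q2 by (simp add: dvd_imp_le)
    moreover have "?N < ?Q"
    proof -
      have "1 * ?N < (?q + 1) * ?N" using q2 by (intro mult_strict_right_mono) auto
      then show ?thesis by simp
    qed
    ultimately show False by simp
  qed
qed



lemma gamma_code:
  fixes eta lam :: "'a::{field,finite}" and g :: "'a qx"
  assumes eta0: "eta \<noteq> 0" and lam0: "lam \<noteq> 0"
    and g0: "g \<noteq> 0" and gen: "\<forall>x. x \<noteq> 0 \<longrightarrow> (\<exists>i. x = g ^ i)"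
    and cop: "coprime e ((CARD('a) + 1) * (CARD('a) - 1))"
    and ge: "g ^ (e * (CARD('a) + 1)) = emb (\<Prod>t<CARD('a) + 1. dd eta lam t)"
  shows "faithful_code (CARD('a) + 1) (matA (CARD('a) + 1) eta lam) (range (Phi (CARD('a) + 1) eta lam (g ^ e))) \<and>
         irreducible_code (CARD('a) + 1) 2 (matA (CARD('a) + 1) eta lam) (range (Phi (CARD('a) + 1) eta lam (g ^ e)))"
proof -
  let ?n = "CARD('a) + 1"
  have q2: "2 \<le> CARD('a)" by (rule card_ge2)
  have n2: "2 \<le> ?n" using q2 by simp
  have c0: "(\<Prod>t<CARD('a) + 1. dd eta lam t) \<noteq> 0" using eta0 lam0 by (simp add: dd_nz)
  have gn: "(g ^ e) ^ ?n = emb (\<Prod>t<?n. dd eta lam t)" using ge by (simp only: power_mult)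
  have ne: "g ^ e \<notin> range emb" and ord: "\<And>k. (g ^ e) ^ k = 1 \<Longrightarrow> (CARD('a) ^ 2 - 1) dvd k"
    using good_from_exp[OF g0 gen cop] by auto
  have ord2: "\<And>k. (g ^ e) ^ k = 1 \<Longrightarrow> (\<forall>v\<in>Fn ?n. (TT ?n eta lam ^^ k) v = v)"
    using TT_period[OF c0] ord by blast
  show ?thesis by (rule code_props[OF n2 eta0 lam0 ne gn ord2])
qed

lemma shift_exp:
  fixes g :: "'a::{field,finite} qx" and c :: 'a
  assumes g0: "g \<noteq> 0" and gen: "\<forall>x. x \<noteq> 0 \<longrightarrow> (\<exists>i. x = g ^ i)"
    and j: "emb c = g ^ ((CARD('a) + 1) * j)"
  shows "g ^ ((j + (CARD('a) - 1) * t) * (CARD('a) + 1)) = emb c"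
proof -
  let ?q = "CARD('a)"
  have go: "\<And>k. g ^ k = 1 \<longleftrightarrow> (?q + 1) * (?q - 1) dvd k"
    by (simp only: gen_order[OF g0 gen] card_qx_minus)
  have gen_id: "\<And>a b. (j + b * t) * a = a * j + (a * b) * t" by (simp add: algebra_simps)
  have "(j + (?q - 1) * t) * (?q + 1) = (?q + 1) * j + ((?q + 1) * (?q - 1)) * t"
    by (rule gen_id)
  then have "g ^ ((j + (?q - 1) * t) * (?q + 1)) = g ^ ((?q + 1) * j) * (g ^ ((?q + 1) * (?q - 1))) ^ t"
    by (simp only: power_add power_mult)
  also have "g ^ ((?q + 1) * (?q - 1)) = 1" by (simp only: go dvd_refl)
  finally show ?thesis using j by simp
qed

lemma part1:
  fixes eta lam :: "'a::{field,finite}"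
    and p f s t r :: nat
  assumes eta_nz: "eta \<noteq> 0" and lam_nz: "lam \<noteq> 0"
    and gen: "{eta ^ i * lam ^ j | i j. True} = {x::'a. x \<noteq> 0}"
    and lam_odd: "odd (mult_ord lam)"
    and eta_2pow: "\<exists>e. mult_ord eta = 2 ^ e"
    and r_prime: "prime r" and r_odd: "odd r"
    and n_fact: "CARD('a) + 1 = 2 ^ s * r ^ t"
  shows "\<exists>C. faithful_code (CARD('a) + 1) (matA (CARD('a) + 1) eta lam) C \<and>
              irreducible_code (CARD('a) + 1) 2 (matA (CARD('a) + 1) eta lam) C"
proof -
  let ?q = "CARD('a)"
  let ?c = "\<Prod>t<CARD('a) + 1. dd eta lam t"
  have q2: "2 \<le> ?q" by (rule card_ge2)
  have c0: "?c \<noteq> 0" using eta_nz lam_nz by (simp add: dd_nz)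
  have cf: "?c = eta ^ ?q * lam ^ (?q + 1)" by (rule c_formula[OF q2])
  have cord: "\<And>m. ?c ^ m = 1 \<Longrightarrow> (?q - 1) dvd m"
    using order_c[OF eta_nz lam_nz gen lam_odd eta_2pow] cf by simp
  obtain g :: "'a qx" where g0: "g \<noteq> 0" and ggen: "\<forall>x. x \<noteq> 0 \<longrightarrow> (\<exists>i. x = g ^ i)"
    using field_gen by blast
  obtain j where j: "emb ?c = g ^ ((?q + 1) * j)" and cj: "coprime j (?q - 1)"
    using exists_j[OF c0 cord g0 ggen] by blast
  define i where "i = (if r dvd j then j + (?q - 1) * 1 else j)"
  have ie: "g ^ (i * (?q + 1)) = emb ?c"
  proof (cases "r dvd j")
    case True
    then show ?thesis using shift_exp[OF g0 ggen j, of 1] by (simp add: i_def)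
  next
    case False
    then show ?thesis using j by (simp add: i_def ac_simps)
  qed
  have ci1: "coprime i (?q - 1)"
    using cj coprime_add_mult_multiple[of j "?q - 1" 1] by (simp add: i_def)
  have ci2: "coprime i (?q + 1)"
  proof -
    have a: "coprime i (2 ^ s)"
    proof (cases s)
      case 0 then show ?thesis by simp
    next
      case (Suc s')
      then have "even (?q + 1)" using n_fact by simp
      then have "even (?q - 1)" using q2 by (metis add_diff_cancel_right' add_diff_inverse_nat
            even_add even_diff_nat nat_less_le not_less one_add_one)
      then have "odd j" using cj by (metis coprime_common_divisor dvd_refl odd_one)
      then have "odd i" using \<open>even (?q - 1)\<close> by (simp add: i_def)
      then show ?thesis by simp
    qed
    have b: "coprime i (r ^ t)"
    proof (cases t)
      case 0 then show ?thesis by simp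
    next
      case (Suc t')
      then have rq: "r dvd ?q + 1" using n_fact by simp
      have "coprime i r"
      proof (cases "r dvd j")
        case False
        then have "coprime r j" by (rule prime_imp_coprime[OF r_prime])
        then show ?thesis using False by (simp add: i_def coprime_commute)
      next
        case True
        have "\<not> r dvd i"
        proof
          assume "r dvd i"
          moreover have "i = j + (?q - 1)" using True by (simp only: i_def if_True mult_1_right)
          ultimately have "r dvd j + (?q - 1)" by simp
          then have "r dvd ?q - 1" using dvd_add_right_iff[OF True, of "?q - 1"] by blast
          moreover have "?q + 1 = (?q - 1) + 2" using q2 by simp
          ultimately have "r dvd 2" using rq by (metis dvd_add_right_iff)
          then have "r \<le> 2" by (simp add: dvd_imp_le)
          moreover have "r \<ge> 2" using r_prime by (simp add: prime_ge_2_nat)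
          ultimately have "r = 2" by simp
          then show False using r_odd by simp
        qed
        then have "coprime r i" by (rule prime_imp_coprime[OF r_prime])
        then show ?thesis by (simp add: coprime_commute)
      qed
      then show ?thesis by simp
    qed
    show ?thesis using a b n_fact by simp
  qed
  have cop: "coprime i ((?q + 1) * (?q - 1))" using ci1 ci2 by (simp only: coprime_mult_right_iff)
  show ?thesis using gamma_code[OF eta_nz lam_nz g0 ggen cop ie] by blast
qed



definition cf :: "'a::{field,finite} qx \<Rightarrow> 'a \<times> 'a" where
  "cf d = (SOME p. d * d = emb (fst p) + emb (snd p) * d)"

lemma cf_eq:
  fixes d :: "'a::{field,finite} qx"
  assumes "d \<notin> range emb"
  shows "d * d = emb (fst (cf d)) + emb (snd (cf d)) * d"
proof -
  obtain a b where "d * d = emb a + emb b * d" using span2[OF assms] by blast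
  then have "\<exists>p. d * d = emb (fst p) + emb (snd p) * d" by (intro exI[of _ "(a, b)"]) simp
  then show ?thesis unfolding cf_def by (rule someI_ex)
qed

definition conj :: "'a::{field,finite} qx \<Rightarrow> 'a qx" where
  "conj d = emb (snd (cf d)) - d"

definition hq :: "'a::{field,finite} qx \<Rightarrow> 'a qx \<Rightarrow> 'a qx" where
  "hq d x = x * x - emb (snd (cf d)) * x - emb (fst (cf d))"

lemma conj_not_emb:
  fixes d :: "'a::{field,finite} qx"
  assumes "d \<notin> range emb"
  shows "conj d \<notin> range emb"
proof
  assume "conj d \<in> range emb"
  then obtain a where "emb (snd (cf d)) - d = emb a" by (auto simp: conj_def)
  then have "d = emb (snd (cf d) - a)" by (simp add: emb_minus algebra_simps)
  then show False using assms by auto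
qed

lemma conj_sq:
  fixes d :: "'a::{field,finite} qx"
  assumes "d \<notin> range emb"
  shows "conj d * conj d = emb (fst (cf d)) + emb (snd (cf d)) * conj d"
proof -
  let ?A = "emb (fst (cf d))" and ?B = "emb (snd (cf d))"
  have e: "d * d = ?A + ?B * d" by (rule cf_eq[OF assms])
  have "(?B - d) * (?B - d) - (?A + ?B * (?B - d)) = d * d - (?A + ?B * d)"
    by (simp add: algebra_simps)
  also have "\<dots> = 0" using e by simp
  finally show ?thesis unfolding conj_def by simp
qed

lemma cf_conj:
  fixes d :: "'a::{field,finite} qx"
  assumes "d \<notin> range emb"
  shows "cf (conj d) = cf d"
proof -
  have n: "conj d \<notin> range emb" by (rule conj_not_emb[OF assms])
  have "emb (fst (cf (conj d))) + emb (snd (cf (conj d))) * conj d = emb (fst (cf d)) + emb (snd (cf d)) * conj d"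
    using cf_eq[OF n] conj_sq[OF assms] by simp
  then have "fst (cf (conj d)) = fst (cf d) \<and> snd (cf (conj d)) = snd (cf d)"
    by (rule coeff_unique[OF n])
  then show ?thesis by (simp add: prod_eq_iff)
qed

lemma conj_conj:
  fixes d :: "'a::{field,finite} qx"
  assumes "d \<notin> range emb"
  shows "conj (conj d) = d"
  using cf_conj[OF assms] by (simp add: conj_def)

lemma hq_self:
  fixes d :: "'a::{field,finite} qx"
  assumes "d \<notin> range emb"
  shows "hq d d = 0"
  using cf_eq[OF assms] by (simp add: hq_def)

lemma hq_root:
  fixes d x :: "'a::{field,finite} qx"
  assumes "d \<notin> range emb" "hq d x = 0"
  shows "x = d \<or> x = conj d"
proof -
  let ?A = "emb (fst (cf d))" and ?B = "emb (snd (cf d))"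
  have e: "d * d = ?A + ?B * d" by (rule cf_eq[OF assms(1)])
  have "(x - d) * (x - (?B - d)) - hq d x = ?A + ?B * d - d * d"
    by (simp add: hq_def algebra_simps)
  also have "\<dots> = 0" using e by simp
  finally have "(x - d) * (x - conj d) = 0" using assms(2) by (simp add: conj_def)
  then show ?thesis by simp
qed

definition Qop :: "nat \<Rightarrow> 'a::{field,finite} \<Rightarrow> 'a \<Rightarrow> 'a qx \<Rightarrow> (nat \<Rightarrow> 'a) \<Rightarrow> nat \<Rightarrow> 'a" where
  "Qop n eta lam d v = TT n eta lam (TT n eta lam v) - vscale (snd (cf d)) (TT n eta lam v) - vscale (fst (cf d)) v"

lemma Qop_Phi:
  fixes g :: "'a::{field,finite} qx"
  assumes n2: "2 \<le> n" and g0: "g \<noteq> 0" and gn: "g ^ n = emb (\<Prod>t<n. dd eta lam t)"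
  shows "Qop n eta lam d (Phi n eta lam g z) = Phi n eta lam g (hq d g * z)"
proof -
  have "Qop n eta lam d (Phi n eta lam g z) =
    Phi n eta lam g (g * (g * z)) - Phi n eta lam g (emb (snd (cf d)) * (g * z)) - Phi n eta lam g (emb (fst (cf d)) * z)"
    by (simp only: Qop_def TT_Phi[OF assms] Phi_scale)
  also have "\<dots> = Phi n eta lam g (g * (g * z) - emb (snd (cf d)) * (g * z) - emb (fst (cf d)) * z)"
    by (simp only: Phi_diff)
  also have "g * (g * z) - emb (snd (cf d)) * (g * z) - emb (fst (cf d)) * z = hq d g * z"
    by (simp add: hq_def algebra_simps)
  finally show ?thesis .
qed

lemma vscale_add: "vscale a (u + v) = vscale a u + vscale a (v :: nat \<Rightarrow> 'a::field)"
  by (rule ext) (simp add: vscale_def algebra_simps)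

lemma Qop_add: "Qop n eta lam d (u + v) = Qop n eta lam d u + Qop n eta lam d v"
proof -
  have "Qop n eta lam d (u + v) = (TT n eta lam (TT n eta lam u) + TT n eta lam (TT n eta lam v))
     - (vscale (snd (cf d)) (TT n eta lam u) + vscale (snd (cf d)) (TT n eta lam v))
     - (vscale (fst (cf d)) u + vscale (fst (cf d)) v)"
    by (simp only: Qop_def TT_add vscale_add)
  then show ?thesis by (simp add: Qop_def algebra_simps)
qed

lemma Qop_zero: "Qop n eta lam d 0 = 0"
  by (rule ext) (simp add: Qop_def TT_zero vscale_def)

lemma Qop_sum: "Qop n eta lam d (\<Sum>i\<in>I. f i) = (\<Sum>i\<in>I. Qop n eta lam d (f i))"
proof (induction I rule: infinite_finite_induct)
  case (infinite A) then show ?case by (metis sum.infinite Qop_zero)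
next
  case empty then show ?case by (metis sum.empty Qop_zero)
next
  case (insert x F) then show ?case by (metis sum.insert Qop_add)
qed



lemma indep:
  fixes D :: "nat \<Rightarrow> 'a::{field,finite} qx"
  assumes n2: "2 \<le> n" and eta0: "eta \<noteq> 0" and lam0: "lam \<noteq> 0"
    and Dne: "\<And>i. i < M \<Longrightarrow> D i \<notin> range emb"
    and Dn: "\<And>i. i < M \<Longrightarrow> D i ^ n = emb (\<Prod>t<n. dd eta lam t)"
    and H: "\<And>i i'. i < M \<Longrightarrow> i' < M \<Longrightarrow> i \<noteq> i' \<Longrightarrow> hq (D i') (D i) \<noteq> 0"
  shows "m \<le> M \<Longrightarrow> (\<Sum>i<m. Phi n eta lam (D i) (z i)) = 0 \<Longrightarrow> \<forall>i<m. z i = 0"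
proof (induction m arbitrary: z)
  case 0 then show ?case by simp
next
  case (Suc m)
  have mM: "m < M" using Suc.prems(1) by simp
  let ?h = "\<lambda>i. hq (D m) (D i)"
  have "Qop n eta lam (D m) (\<Sum>i<Suc m. Phi n eta lam (D i) (z i)) = (\<Sum>i<Suc m. Qop n eta lam (D m) (Phi n eta lam (D i) (z i)))"
    by (rule Qop_sum)
  also have "\<dots> = (\<Sum>i<Suc m. Phi n eta lam (D i) (?h i * z i))"
  proof (rule sum.cong)
    fix i assume "i \<in> {..<Suc m}"
    then have i: "i < M" using Suc.prems(1) by simp
    show "Qop n eta lam (D m) (Phi n eta lam (D i) (z i)) = Phi n eta lam (D i) (?h i * z i)"
      by (rule Qop_Phi[OF n2 g_nz[OF Dne[OF i]] Dn[OF i]])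
  qed simp
  also have "\<dots> = (\<Sum>i<m. Phi n eta lam (D i) (?h i * z i))"
    using hq_self[OF Dne[OF mM]] by (simp add: Phi_zero)
  finally have A: "Qop n eta lam (D m) (\<Sum>i<Suc m. Phi n eta lam (D i) (z i)) = (\<Sum>i<m. Phi n eta lam (D i) (?h i * z i))" .
  have B: "Qop n eta lam (D m) (\<Sum>i<Suc m. Phi n eta lam (D i) (z i)) = 0"
    using Suc.prems(2) by (simp only: Qop_zero)
  have "(\<Sum>i<m. Phi n eta lam (D i) (?h i * z i)) = 0" using B by (simp only: A)
  then have hz: "\<forall>i<m. ?h i * z i = 0" using Suc.IH[of "\<lambda>i. ?h i * z i"] Suc.prems(1) by simp
  have zi: "\<forall>i<m. z i = 0"
  proof (intro allI impI)
    fix i assume i: "i < m"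
    have h0: "?h i \<noteq> 0" using H[of i m] i mM by simp
    have "?h i * z i = 0" using hz i by blast
    then show "z i = 0" using h0 by simp
  qed
  have s0: "(\<Sum>i<m. Phi n eta lam (D i) (z i)) = 0"
    using zi by (simp add: Phi_zero)
  have "(\<Sum>i<Suc m. Phi n eta lam (D i) (z i)) = (\<Sum>i<m. Phi n eta lam (D i) (z i)) + Phi n eta lam (D m) (z m)"
    by (rule sum.lessThan_Suc)
  also have "\<dots> = Phi n eta lam (D m) (z m)" by (simp only: s0 add_0_left)
  finally have "Phi n eta lam (D m) (z m) = (\<Sum>i<Suc m. Phi n eta lam (D i) (z i))" by (rule sym)
  also have "\<dots> = 0" by (rule Suc.prems(2))
  finally have "Phi n eta lam (D m) (z m) = 0" .
  then have "z m = 0" by (rule Phi_inj0[OF n2 eta0 lam0 Dne[OF mM]])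
  then show ?case using zi by (simp add: less_Suc_eq)
qed

lemma card_ext:
  fixes A :: "nat \<Rightarrow> ('b::zero) set"
  assumes fin: "\<And>i. i < M \<Longrightarrow> finite (A i)"
  shows "finite {c. (\<forall>i<M. c i \<in> A i) \<and> (\<forall>i\<ge>M. c i = 0)}"
    and "card {c. (\<forall>i<M. c i \<in> A i) \<and> (\<forall>i\<ge>M. c i = 0)} = (\<Prod>i<M. card (A i))"
proof -
  let ?V = "{c. (\<forall>i<M. c i \<in> A i) \<and> (\<forall>i\<ge>M. c i = 0)}"
  have bij: "bij_betw (\<lambda>c. restrict c {..<M}) ?V (PiE {..<M} A)"
  proof (rule bij_betw_byWitness[where f' = "\<lambda>f i. if i < M then f i else 0"])
    show "\<forall>a\<in>?V. (\<lambda>f i. if i < M then f i else 0) (restrict a {..<M}) = a"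
      by (auto simp: fun_eq_iff)
    show "\<forall>a'\<in>PiE {..<M} A. restrict ((\<lambda>f i. if i < M then f i else 0) a') {..<M} = a'"
      by (auto simp: fun_eq_iff PiE_def extensional_def)
    show "(\<lambda>c. restrict c {..<M}) ` ?V \<subseteq> PiE {..<M} A"
    proof (rule image_subsetI)
      fix c assume "c \<in> ?V"
      then have "\<forall>i\<in>{..<M}. c i \<in> A i" by simp
      then show "restrict c {..<M} \<in> PiE {..<M} A" by (simp only: restrict_PiE_iff)
    qed
    show "(\<lambda>f i. if i < M then f i else 0) ` PiE {..<M} A \<subseteq> ?V"
    proof (rule image_subsetI)
      fix f assume f: "f \<in> PiE {..<M} A"
      have "\<forall>i<M. f i \<in> A i" using PiE_mem[OF f] by simp
      then show "(\<lambda>i. if i < M then f i else 0) \<in> ?V" by simp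
    qed
  qed
  have fP: "finite (PiE {..<M} A)" by (rule finite_PiE) (auto intro: fin)
  show "finite ?V" using bij fP bij_betw_finite by blast
  have "card ?V = card (PiE {..<M} A)" by (rule bij_betw_same_card[OF bij])
  also have "\<dots> = (\<Prod>i<M. card (A i))" by (simp add: card_PiE)
  finally show "card ?V = (\<Prod>i<M. card (A i))" .
qed

lemma Fn_alt: "Fn n = {c. (\<forall>i<n. c i \<in> UNIV) \<and> (\<forall>i\<ge>n. c i = 0)}"
  by (auto simp: Fn_def)

lemma card_Fn: "card (Fn n :: (nat \<Rightarrow> 'a::{zero,finite}) set) = CARD('a) ^ n"
  using card_ext(2)[of n "\<lambda>_. UNIV :: 'a::{zero,finite} set"] by (simp add: Fn_alt)

lemma finite_Fn: "finite (Fn n :: (nat \<Rightarrow> 'a::{zero,finite}) set)"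
  using card_ext(1)[of n "\<lambda>_. UNIV :: 'a::{zero,finite} set"] by (simp add: Fn_alt)

lemma Fn_subspace: "VS.subspace (Fn n :: (nat \<Rightarrow> 'a::field) set)"
  by (rule VS.subspaceI) (auto simp: Fn_def vscale_def)

lemma Fn_sum: "(\<And>i. i \<in> I \<Longrightarrow> f i \<in> Fn n) \<Longrightarrow> (\<Sum>i\<in>I. f i) \<in> (Fn n :: (nat \<Rightarrow> 'a::field) set)"
  by (rule VS.subspace_sum[OF Fn_subspace])



lemma mersenne_odd:
  assumes p: "prime (q::nat)" and m: "q = 2 ^ m0 - 1"
  shows "odd q" "q + 1 = 2 ^ m0"
proof -
  have one: "1 \<le> (2::nat) ^ m0" by simp
  then show qn: "q + 1 = 2 ^ m0" using m by simp
  have "q \<noteq> 2"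
  proof
    assume "q = 2"
    then have h: "2 ^ m0 = (3::nat)" using qn by simp
    show False
    proof (cases m0)
      case 0 then show False using h by simp
    next
      case (Suc k)
      then have "2 * 2 ^ k = (3::nat)" using h by simp
      then have "(2 * 2 ^ k) mod 2 = (3::nat) mod 2" by simp
      then show False by simp
    qed
  qed
  moreover have "q > 1" using p by (rule prime_gt_1_nat)
  ultimately have "q > 2" by simp
  then show "odd q" using p prime_odd_nat by blast
qed

lemma selection:
  fixes G :: "nat \<Rightarrow> 'a::{field,finite} qx"
  assumes ne: "\<And>t. t < n \<Longrightarrow> G t \<notin> range emb"
    and dist: "\<And>t1 t2. t1 < n \<Longrightarrow> t2 < n \<Longrightarrow> G t1 = G t2 \<Longrightarrow> t1 = t2"
  shows "\<exists>S. S \<subseteq> {..<n} \<and> n \<le> 2 * card S \<and> (\<forall>t1\<in>S. \<forall>t2\<in>S. t1 \<noteq> t2 \<longrightarrow> hq (G t2) (G t1) \<noteq> 0)"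
proof -
  define S where "S = {t. t < n \<and> \<not> (\<exists>t'<t. G t' = conj (G t))}"
  have Sn: "S \<subseteq> {..<n}" by (auto simp: S_def)
  have A: "\<forall>t1\<in>S. \<forall>t2\<in>S. t1 \<noteq> t2 \<longrightarrow> hq (G t2) (G t1) \<noteq> 0"
  proof (intro ballI impI notI)
    fix t1 t2 assume t1: "t1 \<in> S" and t2: "t2 \<in> S" and d: "t1 \<noteq> t2" and h: "hq (G t2) (G t1) = 0"
    have n1: "t1 < n" and n2: "t2 < n" using t1 t2 by (auto simp: S_def)
    have "G t1 = G t2 \<or> G t1 = conj (G t2)" by (rule hq_root[OF ne[OF n2] h])
    then have c1: "G t1 = conj (G t2)" using dist[OF n1 n2] d by blast
    then have c2: "G t2 = conj (G t1)" using conj_conj[OF ne[OF n2]] by simp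
    show False
    proof (cases "t1 < t2")
      case True then show False using t2 c1 by (auto simp: S_def)
    next
      case False then have "t2 < t1" using d by simp
      then show False using t1 c2 by (auto simp: S_def)
    qed
  qed
  define Dset where "Dset = {..<n} - S"
  define fsel where "fsel t = (SOME t'. t' < t \<and> G t' = conj (G t))" for t
  have fsel: "fsel t < t \<and> G (fsel t) = conj (G t)" if "t \<in> Dset" for t
  proof -
    have "\<exists>t'. t' < t \<and> G t' = conj (G t)" using that by (auto simp: Dset_def S_def)
    then show ?thesis unfolding fsel_def by (rule someI_ex)
  qed
  have fS: "fsel ` Dset \<subseteq> S"
  proof
    fix x assume "x \<in> fsel ` Dset"
    then obtain t where t: "t \<in> Dset" and x: "x = fsel t" by auto
    have tn: "t < n" using t by (auto simp: Dset_def)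
    have xt: "x < t" and gx: "G x = conj (G t)" using fsel[OF t] x by auto
    have xn: "x < n" using xt tn by simp
    show "x \<in> S"
    proof (rule ccontr)
      assume "x \<notin> S"
      then obtain t'' where t'': "t'' < x" "G t'' = conj (G x)" using xn by (auto simp: S_def)
      then have "G t'' = G t" using gx conj_conj[OF ne[OF tn]] by simp
      then have "t'' = t" using dist t'' xn tn by (meson less_trans)
      then show False using t'' xt by simp
    qed
  qed
  have inj: "inj_on fsel Dset"
  proof
    fix t1 t2 assume t1: "t1 \<in> Dset" and t2: "t2 \<in> Dset" and e: "fsel t1 = fsel t2"
    have n1: "t1 < n" and n2: "t2 < n" using t1 t2 by (auto simp: Dset_def)
    have "conj (G t1) = conj (G t2)" using fsel[OF t1] fsel[OF t2] e by simp
    then have "conj (conj (G t1)) = conj (conj (G t2))" by simp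
    then have "G t1 = G t2" using conj_conj[OF ne[OF n1]] conj_conj[OF ne[OF n2]] by simp
    then show "t1 = t2" by (rule dist[OF n1 n2])
  qed
  have fin: "finite S" using Sn finite_subset by blast
  have "card Dset \<le> card S" by (rule card_inj_on_le[OF inj fS fin])
  moreover have "card Dset = n - card S" unfolding Dset_def using Sn by (simp add: card_Diff_subset fin)
  moreover have "card S \<le> n" using Sn by (metis card_lessThan card_mono finite_lessThan)
  ultimately have "n \<le> 2 * card S" by simp
  then show ?thesis using Sn A by blast
qed

lemma direct_sum:
  fixes D :: "nat \<Rightarrow> 'a::{field,finite} qx"
  assumes n2: "2 \<le> n" and eta0: "eta \<noteq> 0" and lam0: "lam \<noteq> 0"
    and Dne: "\<And>i. i < M \<Longrightarrow> D i \<notin> range emb"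
    and Dn: "\<And>i. i < M \<Longrightarrow> D i ^ n = emb (\<Prod>t<n. dd eta lam t)"
    and H: "\<And>i i'. i < M \<Longrightarrow> i' < M \<Longrightarrow> i \<noteq> i' \<Longrightarrow> hq (D i') (D i) \<noteq> 0"
    and nM: "n \<le> 2 * M"
  shows "\<forall>v\<in>Fn n. \<exists>!c. (\<forall>i<M. c i \<in> range (Phi n eta lam (D i))) \<and> (\<forall>i\<ge>M. c i = 0) \<and> v = (\<Sum>i<M. c i)"
proof -
  let ?C = "\<lambda>i. range (Phi n eta lam (D i))"
  have I: "\<And>m z. m \<le> M \<Longrightarrow> (\<Sum>i<m. Phi n eta lam (D i) (z i)) = 0 \<Longrightarrow> \<forall>i<m. z i = 0"
    by (rule indep[OF n2 eta0 lam0 Dne Dn H])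
  define V where "V = {c. (\<forall>i<M. c i \<in> ?C i) \<and> (\<forall>i\<ge>M. c i = 0)}"
  define F where "F c = (\<Sum>i<M. c i)" for c :: "nat \<Rightarrow> nat \<Rightarrow> 'a"
  have cardC: "card (?C i) = CARD('a) ^ 2" if "i < M" for i
  proof -
    have "inj (Phi n eta lam (D i))" using Phi_inj[OF n2 eta0 lam0 Dne[OF that]] by (auto simp: inj_def)
    then have "card (?C i) = CARD('a qx)" by (simp add: card_image)
    then show ?thesis by (simp add: card_qx)
  qed
  have finC: "finite (?C i)" for i by simp
  have cardV: "card V = (CARD('a) ^ 2) ^ M"
  proof -
    have "card V = (\<Prod>i<M. card (?C i))" unfolding V_def by (rule card_ext(2)) simp
    also have "\<dots> = (\<Prod>i<M. CARD('a) ^ 2)" by (rule prod.cong) (simp_all add: cardC)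
    finally show ?thesis by simp
  qed
  have FV: "F ` V \<subseteq> Fn n"
  proof
    fix x assume "x \<in> F ` V"
    then obtain c where c: "c \<in> V" and x: "x = F c" by auto
    have "\<And>i. i \<in> {..<M} \<Longrightarrow> c i \<in> Fn n"
    proof -
      fix i assume "i \<in> {..<M}"
      then have "c i \<in> ?C i" using c by (simp add: V_def)
      then obtain z where "c i = Phi n eta lam (D i) z" by blast
      then show "c i \<in> Fn n" by (simp add: Phi_Fn)
    qed
    then have "(\<Sum>i<M. c i) \<in> Fn n" by (rule Fn_sum)
    then show "x \<in> Fn n" using x by (simp add: F_def)
  qed
  have rep: "\<exists>Z. \<forall>i<M. c i = Phi n eta lam (D i) (Z i)" if "c \<in> V" for c
  proof -
    have "\<forall>i. \<exists>z. i < M \<longrightarrow> c i = Phi n eta lam (D i) z" using that by (auto simp: V_def)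
    from choice[OF this] obtain Z where "\<forall>i. i < M \<longrightarrow> c i = Phi n eta lam (D i) (Z i)" by blast
    then show ?thesis by blast
  qed
  have injF: "inj_on F V"
  proof
    fix c c' assume c: "c \<in> V" and c': "c' \<in> V" and e: "F c = F c'"
    obtain Z where Z: "\<forall>i<M. c i = Phi n eta lam (D i) (Z i)" using rep[OF c] by blast
    obtain Z' where Z': "\<forall>i<M. c' i = Phi n eta lam (D i) (Z' i)" using rep[OF c'] by blast
    have "(\<Sum>i<M. Phi n eta lam (D i) (Z i - Z' i)) = (\<Sum>i<M. c i - c' i)"
      by (rule sum.cong) (simp_all add: Phi_diff Z Z')
    also have "\<dots> = F c - F c'" by (simp add: F_def sum_subtractf)
    also have "\<dots> = 0" using e by simp
    finally have s0: "(\<Sum>i<M. Phi n eta lam (D i) (Z i - Z' i)) = 0" .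
    have "\<forall>i<M. Z i - Z' i = 0" by (rule I[OF order_refl s0])
    then have "\<forall>i<M. c i = c' i" using Z Z' by simp
    moreover have "\<forall>i\<ge>M. c i = c' i" using c c' by (simp add: V_def)
    ultimately show "c = c'"
    proof -
      assume a1: "\<forall>i<M. c i = c' i" and a2: "\<forall>i\<ge>M. c i = c' i"
      show "c = c'"
      proof (rule ext)
        fix i show "c i = c' i" using a1 a2 by (cases "i < M") auto
      qed
    qed
  qed
  have finV: "finite V" unfolding V_def by (rule card_ext(1)) simp
  have q1: "1 \<le> CARD('a)" using card_ge2[where 'a='a] by simp
  have "card (Fn n :: (nat \<Rightarrow> 'a) set) = CARD('a) ^ n" by (rule card_Fn)
  also have "\<dots> \<le> CARD('a) ^ (2 * M)" using nM q1 by (simp add: power_increasing)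
  also have "\<dots> = card V" using cardV by (simp add: power_mult)
  also have "\<dots> = card (F ` V)" using card_image[OF injF] by simp
  finally have "card (Fn n :: (nat \<Rightarrow> 'a) set) \<le> card (F ` V)" .
  then have FVeq: "F ` V = Fn n" using card_seteq[OF finite_Fn FV] by blast
  show ?thesis
  proof
    fix v :: "nat \<Rightarrow> 'a" assume v: "v \<in> Fn n"
    then have "v \<in> F ` V" using FVeq by simp
    then obtain c where c: "c \<in> V" and vc: "v = F c" by blast
    show "\<exists>!c. (\<forall>i<M. c i \<in> ?C i) \<and> (\<forall>i\<ge>M. c i = 0) \<and> v = (\<Sum>i<M. c i)"
    proof (rule ex1I[of _ c])
      show "(\<forall>i<M. c i \<in> ?C i) \<and> (\<forall>i\<ge>M. c i = 0) \<and> v = (\<Sum>i<M. c i)"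
        using c vc by (simp add: V_def F_def)
      fix c' assume h: "(\<forall>i<M. c' i \<in> ?C i) \<and> (\<forall>i\<ge>M. c' i = 0) \<and> v = (\<Sum>i<M. c' i)"
      then have c'V: "c' \<in> V" by (simp add: V_def)
      have "F c' = F c" using h vc by (simp add: F_def)
      then show "c' = c" using inj_onD[OF injF _ c'V c] by blast
    qed
  qed
qed



lemma part2:
  fixes eta lam :: "'a::{field,finite}"
  assumes eta_nz: "eta \<noteq> 0" and lam_nz: "lam \<noteq> 0"
    and gen: "{eta ^ i * lam ^ j | i j. True} = {x::'a. x \<noteq> 0}"
    and lam_odd: "odd (mult_ord lam)"
    and eta_2pow: "\<exists>e. mult_ord eta = 2 ^ e"
    and qprime: "prime (CARD('a))" and mers: "CARD('a) = 2 ^ m0 - 1"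
  shows "\<exists>(Cs :: nat \<Rightarrow> (nat \<Rightarrow> 'a) set) m.
            (\<forall>i<m. faithful_code (CARD('a) + 1) (matA (CARD('a) + 1) eta lam) (Cs i) \<and>
                   irreducible_code (CARD('a) + 1) 2 (matA (CARD('a) + 1) eta lam) (Cs i)) \<and>
            (\<forall>v\<in>Fn (CARD('a) + 1). \<exists>!c :: nat \<Rightarrow> nat \<Rightarrow> 'a.
                (\<forall>i<m. c i \<in> Cs i) \<and> (\<forall>i\<ge>m. c i = 0) \<and> v = (\<Sum>i<m. c i))"
proof -
  let ?q = "CARD('a)"
  let ?n = "CARD('a) + 1"
  let ?c = "\<Prod>t<CARD('a) + 1. dd eta lam t"
  have q2: "2 \<le> ?q" by (rule card_ge2)
  have n2: "2 \<le> ?n" using q2 by simp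
  have c0: "?c \<noteq> 0" using eta_nz lam_nz by (simp add: dd_nz)
  have cf: "?c = eta ^ ?q * lam ^ (?q + 1)" by (rule c_formula[OF q2])
  have cord: "\<And>m. ?c ^ m = 1 \<Longrightarrow> (?q - 1) dvd m"
    using order_c[OF eta_nz lam_nz gen lam_odd eta_2pow] cf by simp
  obtain g :: "'a qx" where g0: "g \<noteq> 0" and ggen: "\<forall>x. x \<noteq> 0 \<longrightarrow> (\<exists>i. x = g ^ i)"
    using field_gen by blast
  have go: "\<And>k. g ^ k = 1 \<longleftrightarrow> (?q + 1) * (?q - 1) dvd k"
    by (simp only: gen_order[OF g0 ggen] card_qx_minus)
  obtain j where j: "emb ?c = g ^ ((?q + 1) * j)" and cj: "coprime j (?q - 1)"
    using exists_j[OF c0 cord g0 ggen] by blast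
  have oq: "odd ?q" and qn: "?q + 1 = 2 ^ m0" using mersenne_odd[OF qprime mers] by auto
  have ev: "even (?q - 1)" using oq q2 by simp
  have oj: "odd j"
  proof
    assume "even j"
    then have "is_unit (2::nat)" using cj ev coprime_common_divisor by blast
    then show False by simp
  qed
  define ex where "ex t = j + (?q - 1) * t" for t
  define G where "G t = g ^ ex t" for t
  have cop: "coprime (ex t) ((?q + 1) * (?q - 1))" for t
  proof -
    have a: "coprime (ex t) (?q - 1)" using cj coprime_add_mult_multiple[of j "?q - 1" t] by (simp add: ex_def)
    have "odd (ex t)" using oj ev by (simp add: ex_def)
    then have "coprime (ex t) 2" by simp
    then have "coprime (ex t) (2 ^ m0)" by simp
    then have b: "coprime (ex t) (?q + 1)" using qn by simp
    show ?thesis using a b by (simp only: coprime_mult_right_iff)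
  qed
  have ge: "g ^ (ex t * (?q + 1)) = emb ?c" for t
    unfolding ex_def by (rule shift_exp[OF g0 ggen j])
  have codes: "faithful_code ?n (matA ?n eta lam) (range (Phi ?n eta lam (G t))) \<and>
         irreducible_code ?n 2 (matA ?n eta lam) (range (Phi ?n eta lam (G t)))" for t
    unfolding G_def by (rule gamma_code[OF eta_nz lam_nz g0 ggen cop ge])
  have ne: "G t \<notin> range emb" for t
    unfolding G_def using good_from_exp(1)[OF g0 ggen cop] .
  have Gn: "G t ^ ?n = emb ?c" for t
    unfolding G_def using ge[of t] by (simp only: power_mult)
  have dist0: "t1 = t2" if le: "t1 \<le> t2" and t2: "t2 < ?n" and e: "G t1 = G t2" for t1 t2
  proof -
    have "(?q - 1) * t2 = (?q - 1) * t1 + (?q - 1) * (t2 - t1)" using le by (simp add: diff_mult_distrib2)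
    then have "ex t2 = ex t1 + (?q - 1) * (t2 - t1)" by (simp add: ex_def)
    then have "G t2 = G t1 * g ^ ((?q - 1) * (t2 - t1))" by (simp add: G_def power_add)
    then have "G t1 * g ^ ((?q - 1) * (t2 - t1)) = G t1 * 1" using e by simp
    moreover have "G t1 \<noteq> 0" using g0 by (simp add: G_def)
    ultimately have "g ^ ((?q - 1) * (t2 - t1)) = 1" using mult_left_cancel by blast
    then have "(?q + 1) * (?q - 1) dvd (?q - 1) * (t2 - t1)" by (simp only: go)
    then have "(?q - 1) * (?q + 1) dvd (?q - 1) * (t2 - t1)" by (simp only: mult.commute)
    moreover have "?q - 1 \<noteq> 0" using q2 by simp
    ultimately have "(?q + 1) dvd (t2 - t1)" using nat_mult_dvd_cancel_disj[of "?q - 1" "?q + 1" "t2 - t1"] by auto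
    moreover have "t2 - t1 < ?q + 1" using t2 by simp
    ultimately have "t2 - t1 = 0" using nat_dvd_not_less by blast
    then show ?thesis using le by simp
  qed
  have dist: "t1 = t2" if "t1 < ?n" "t2 < ?n" "G t1 = G t2" for t1 t2
  proof (cases "t1 \<le> t2")
    case True then show ?thesis using dist0 that by blast
  next
    case False then have "t2 \<le> t1" by simp
    then show ?thesis using dist0[of t2 t1] that by simp
  qed
  obtain S where Sn: "S \<subseteq> {..<?n}" and nS: "?n \<le> 2 * card S"
    and SA: "\<forall>t1\<in>S. \<forall>t2\<in>S. t1 \<noteq> t2 \<longrightarrow> hq (G t2) (G t1) \<noteq> 0"
    using selection[of ?n G, OF ne dist] by blast
  have finS: "finite S" using Sn finite_subset by blast
  obtain e' where e': "bij_betw e' {0..<card S} S" using ex_bij_betw_nat_finite[OF finS] by blast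
  define M where "M = card S"
  define D where "D i = G (e' i)" for i
  have eS: "e' i \<in> S" if "i < M" for i using e' that by (auto simp: M_def bij_betw_def)
  have Dne: "D i \<notin> range emb" if "i < M" for i by (simp add: D_def ne)
  have Dn: "D i ^ ?n = emb ?c" if "i < M" for i unfolding D_def by (rule Gn)
  have H: "hq (D i') (D i) \<noteq> 0" if "i < M" "i' < M" "i \<noteq> i'" for i i'
  proof -
    have "e' i \<noteq> e' i'" using e' that by (auto simp: M_def bij_betw_def inj_on_def)
    then show ?thesis using SA eS[OF that(1)] eS[OF that(2)] by (simp add: D_def)
  qed
  have ds: "\<forall>v\<in>Fn ?n. \<exists>!c. (\<forall>i<M. c i \<in> range (Phi ?n eta lam (D i))) \<and> (\<forall>i\<ge>M. c i = 0) \<and> v = (\<Sum>i<M. c i)"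
    by (rule direct_sum[OF n2 eta_nz lam_nz Dne Dn H]) (use nS in \<open>simp_all add: M_def\<close>)
  have cs: "\<forall>i<M. faithful_code ?n (matA ?n eta lam) (range (Phi ?n eta lam (D i))) \<and>
                   irreducible_code ?n 2 (matA ?n eta lam) (range (Phi ?n eta lam (D i)))"
    using codes by (simp add: D_def)
  show ?thesis
    apply (rule exI[where x="\<lambda>i. range (Phi ?n eta lam (D i))"])
    apply (rule exI[where x=M])
    apply (rule conjI)
     apply (rule cs)
    apply (rule ds)
    done
qed


theorem theorem5p3:
  fixes eta lam :: "'a::{field,finite}"
    and p f s t r :: nat
  assumes q_pow: "CARD('a) = p ^ f" and p_prime: "prime p" and f_pos: "f \<ge> 1"
    and eta_nz: "eta \<noteq> 0" and lam_nz: "lam \<noteq> 0"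
    and gen: "{eta ^ i * lam ^ j | i j. True} = {x::'a. x \<noteq> 0}"
    and lam_odd: "odd (mult_ord lam)"
    and eta_2pow: "\<exists>e. mult_ord eta = 2 ^ e"
    and r_prime: "prime r" and r_odd: "odd r"
    and n_fact: "CARD('a) + 1 = 2 ^ s * r ^ t"
  shows "(\<exists>C. faithful_code (CARD('a) + 1) (matA (CARD('a) + 1) eta lam) C \<and>
              irreducible_code (CARD('a) + 1) 2 (matA (CARD('a) + 1) eta lam) C)
    \<and> ((prime (CARD('a)) \<and> (\<exists>m. CARD('a) = 2 ^ m - 1)) \<longrightarrow>
         (\<exists>(Cs :: nat \<Rightarrow> (nat \<Rightarrow> 'a) set) m.
            (\<forall>i<m. faithful_code (CARD('a) + 1) (matA (CARD('a) + 1) eta lam) (Cs i) \<and>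
                   irreducible_code (CARD('a) + 1) 2 (matA (CARD('a) + 1) eta lam) (Cs i)) \<and>
            (\<forall>v\<in>Fn (CARD('a) + 1). \<exists>!c :: nat \<Rightarrow> nat \<Rightarrow> 'a.
                (\<forall>i<m. c i \<in> Cs i) \<and> (\<forall>i\<ge>m. c i = 0) \<and> v = (\<Sum>i<m. c i))))"
  proof -
  have P1: "\<exists>C. faithful_code (CARD('a) + 1) (matA (CARD('a) + 1) eta lam) C \<and>
              irreducible_code (CARD('a) + 1) 2 (matA (CARD('a) + 1) eta lam) C"
    by (rule part1[OF eta_nz lam_nz gen lam_odd eta_2pow r_prime r_odd n_fact])
  have P2: "(prime (CARD('a)) \<and> (\<exists>m. CARD('a) = 2 ^ m - 1)) \<longrightarrow>
         (\<exists>(Cs :: nat \<Rightarrow> (nat \<Rightarrow> 'a) set) m.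
            (\<forall>i<m. faithful_code (CARD('a) + 1) (matA (CARD('a) + 1) eta lam) (Cs i) \<and>
                   irreducible_code (CARD('a) + 1) 2 (matA (CARD('a) + 1) eta lam) (Cs i)) \<and>
            (\<forall>v\<in>Fn (CARD('a) + 1). \<exists>!c :: nat \<Rightarrow> nat \<Rightarrow> 'a.
                (\<forall>i<m. c i \<in> Cs i) \<and> (\<forall>i\<ge>m. c i = 0) \<and> v = (\<Sum>i<m. c i)))"
  proof (rule impI)
    assume h: "prime (CARD('a)) \<and> (\<exists>m. CARD('a) = 2 ^ m - 1)"
    then obtain m0 where m0: "CARD('a) = 2 ^ m0 - 1" by blast
    show "\<exists>(Cs :: nat \<Rightarrow> (nat \<Rightarrow> 'a) set) m.
            (\<forall>i<m. faithful_code (CARD('a) + 1) (matA (CARD('a) + 1) eta lam) (Cs i) \<and>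
                   irreducible_code (CARD('a) + 1) 2 (matA (CARD('a) + 1) eta lam) (Cs i)) \<and>
            (\<forall>v\<in>Fn (CARD('a) + 1). \<exists>!c :: nat \<Rightarrow> nat \<Rightarrow> 'a.
                (\<forall>i<m. c i \<in> Cs i) \<and> (\<forall>i\<ge>m. c i = 0) \<and> v = (\<Sum>i<m. c i))"
      using h by (intro part2[OF eta_nz lam_nz gen lam_odd eta_2pow _ m0]) blast
  qed
  show ?thesis by (rule conjI[OF P1 P2])
qed

end
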